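(* Let $G$ be a word-hyperbolic group with a finite generating set and let $d$ be the associated word-length metric (Cayley graph metric). Then the action of $G$ on the metric boundary $\partial_d G$ is amenable.
   Context: A group with finite presentation $\langle S\mid R\rangle$ is word-hyperbolic if there is $K\ge0$ such that every reduced word $w$ with $w=e$ in $G$ is a product of at most $K\,l(w)$ conjugates $u^{-1}ru$ with $r\in R\cup R^{-1}$ (equivalently its Cayley graph with the graph metric is a hyperbolic metric space). Metric boundary: fix base point $0$, let $\varphi_y(x)=d(x,0)-d(x,y)$; the metric compactification is the maximal ideal space of the commutative unital C*-algebra generated by the functions vanishing at infinity, the constants and the $\varphi_y$; the metric boundary is the compactification minus the space itself. $G$ acts on it by $\alpha_g(\omega)=\lim_k g x_k$ for $x_k\to\omega$. An action of a topological group $G$ on a topological space $Y$ is amenable if there is a net of continuous maps $m_\lambda:Y\to M_1^+(G)$ ($M_1^+(G)$ the Borel probability measures on $G$) with $\|g\cdot m_\lambda(y)-m_\lambda(g\cdot y)\|\to0$ uniformly on compact subsets of $G\times Y$. *)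

theory Defs
  imports "HOL-Analysis.Analysis"
begin

text \<open>The group is a type of class group_add (written additively, not assumed
commutative); its neutral element 0 is the base point.\<close>

definition generates :: "'a::group_add set \<Rightarrow> bool" where
  "generates S \<longleftrightarrow> (\<forall>g. \<exists>ws. set ws \<subseteq> S \<union> uminus ` S \<and> sum_list ws = g)"

definition word_len :: "'a::group_add set \<Rightarrow> 'a \<Rightarrow> nat" where
  "word_len S g = (LEAST n. \<exists>ws. length ws = n \<and> set ws \<subseteq> S \<union> uminus ` S \<and> sum_list ws = g)"

text \<open>Word metric = graph metric of the Cayley graph (edges x -- x + s).\<close>
definition word_dist :: "'a::group_add set \<Rightarrow> 'a \<Rightarrow> 'a \<Rightarrow> real" where
  "word_dist S x y = real (word_len S (- x + y))"

definition gromov_prod :: "'a::group_add set \<Rightarrow> 'a \<Rightarrow> 'a \<Rightarrow> 'a \<Rightarrow> real" where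
  "gromov_prod S x y w = (word_dist S x w + word_dist S y w - word_dist S x y) / 2"

text \<open>Gromov hyperbolicity of the Cayley graph metric (four-point condition on the
vertex set, which is 1-dense in the Cayley graph).\<close>
definition word_hyperbolic :: "'a::group_add set \<Rightarrow> bool" where
  "word_hyperbolic S \<longleftrightarrow> (\<exists>\<delta>::real. \<forall>x y z w.
      gromov_prod S x z w \<ge> min (gromov_prod S x y w) (gromov_prod S y z w) - \<delta>)"

definition busemann :: "'a::group_add set \<Rightarrow> 'a \<Rightarrow> 'a \<Rightarrow> complex" where
  "busemann S y = (\<lambda>x. complex_of_real (word_dist S x 0 - word_dist S x y))"

definition vanish_at_infinity :: "('a \<Rightarrow> complex) set" where
  "vanish_at_infinity = {f. \<forall>\<epsilon>>0. finite {x. \<epsilon> \<le> cmod (f x)}}"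

definition gen_set :: "'a::group_add set \<Rightarrow> ('a \<Rightarrow> complex) set" where
  "gen_set S = vanish_at_infinity \<union> range (\<lambda>c. (\<lambda>x. c)) \<union> range (busemann S)"

inductive_set star_alg :: "('a \<Rightarrow> complex) set \<Rightarrow> ('a \<Rightarrow> complex) set" for B where
  gen: "f \<in> B \<Longrightarrow> f \<in> star_alg B"
| add: "f \<in> star_alg B \<Longrightarrow> g \<in> star_alg B \<Longrightarrow> (\<lambda>x. f x + g x) \<in> star_alg B"
| mult: "f \<in> star_alg B \<Longrightarrow> g \<in> star_alg B \<Longrightarrow> (\<lambda>x. f x * g x) \<in> star_alg B"
| scal: "f \<in> star_alg B \<Longrightarrow> (\<lambda>x. c * f x) \<in> star_alg B"
| conj: "f \<in> star_alg B \<Longrightarrow> (\<lambda>x. cnj (f x)) \<in> star_alg B"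

definition cstar_alg :: "'a::group_add set \<Rightarrow> ('a \<Rightarrow> complex) set" where
  "cstar_alg S = {f. \<forall>\<epsilon>>0. \<exists>h\<in>star_alg (gen_set S). \<forall>x. cmod (f x - h x) \<le> \<epsilon>}"

text \<open>Maximal ideal space = characters (nonzero multiplicative linear functionals),
with the weak-* topology (subspace of the product topology on the function type).
Characters are made extensional by setting them 0 outside the algebra.\<close>
definition metric_compactification :: "'a::group_add set \<Rightarrow> (('a \<Rightarrow> complex) \<Rightarrow> complex) set" where
  "metric_compactification S = {ch.
      (\<forall>f\<in>cstar_alg S. \<forall>g\<in>cstar_alg S.
          ch (\<lambda>x. f x + g x) = ch f + ch g \<and> ch (\<lambda>x. f x * g x) = ch f * ch g) \<and>
      (\<forall>f\<in>cstar_alg S. \<forall>c. ch (\<lambda>x. c * f x) = c * ch f) \<and>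
      ch (\<lambda>x. 1) = 1 \<and>
      (\<forall>f. f \<notin> cstar_alg S \<longrightarrow> ch f = 0)}"

definition eval_char :: "'a::group_add set \<Rightarrow> 'a \<Rightarrow> (('a \<Rightarrow> complex) \<Rightarrow> complex)" where
  "eval_char S x = (\<lambda>f. if f \<in> cstar_alg S then f x else 0)"

definition metric_boundary :: "'a::group_add set \<Rightarrow> (('a \<Rightarrow> complex) \<Rightarrow> complex) set" where
  "metric_boundary S = metric_compactification S - range (eval_char S)"

text \<open>alpha_g(omega) = lim g x_k for x_k -> omega.\<close>
definition bdry_action :: "'a::group_add set \<Rightarrow> 'a \<Rightarrow> (('a \<Rightarrow> complex) \<Rightarrow> complex)
    \<Rightarrow> (('a \<Rightarrow> complex) \<Rightarrow> complex)" where
  "bdry_action S g \<omega> = (THE L.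
      ((\<lambda>ch. eval_char S (g + inv (eval_char S) ch)) \<longlongrightarrow> L)
        (at \<omega> within range (eval_char S)))"

text \<open>Probability measures on the discrete group G are functions mu with mu >= 0 and
total mass 1; continuity into M_1^+(G) is weak-* continuity, i.e. continuity of each
coordinate; the norm is the total variation (l1) norm; (g.mu)(x) = mu(g^-1 x).
Existence of a net with uniform convergence on compact subsets of G x Y
(G discrete, so compact sets lie in F x C with F finite and C compact) is
stated in the equivalent form: for every such F, C and epsilon there is a map.\<close>
definition amenable_action :: "('g::group_add \<Rightarrow> 'y::topological_space \<Rightarrow> 'y) \<Rightarrow> 'y set \<Rightarrow> bool" where
  "amenable_action act Y \<longleftrightarrow>
    (\<forall>F C \<epsilon>. finite F \<and> compact C \<and> C \<subseteq> Y \<and> \<epsilon> > (0::real) \<longrightarrow>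
      (\<exists>m :: 'y \<Rightarrow> 'g \<Rightarrow> real.
         (\<forall>y\<in>Y. (\<forall>x. m y x \<ge> 0) \<and> (m y has_sum 1) UNIV) \<and>
         (\<forall>x. continuous_on Y (\<lambda>y. m y x)) \<and>
         (\<forall>g\<in>F. \<forall>y\<in>C. infsum (\<lambda>x. \<bar>m y (- g + x) - m (act g y) x\<bar>) UNIV < \<epsilon>)))"

end

theory Submission
  imports Defs
begin


lemma sum_list_rev_uminus:
  fixes ws :: "'a::group_add list"
  shows "sum_list (rev (map uminus ws)) = - sum_list ws"
  by (induction ws) (auto simp: minus_add)

context
  fixes S :: "'a::group_add set"
  assumes gen: "generates S"
begin

lemma wl_ex: "\<exists>ws. length ws = word_len S g \<and> set ws \<subseteq> S \<union> uminus ` S \<and> sum_list ws = g"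
proof -
  obtain ws where "set ws \<subseteq> S \<union> uminus ` S \<and> sum_list ws = g"
    using gen unfolding generates_def by blast
  then have "\<exists>n ws. length ws = n \<and> set ws \<subseteq> S \<union> uminus ` S \<and> sum_list ws = g" by blast
  then show ?thesis unfolding word_len_def by (rule LeastI_ex)
qed

lemma wl_le: "set ws \<subseteq> S \<union> uminus ` S \<Longrightarrow> word_len S (sum_list ws) \<le> length ws"
  unfolding word_len_def by (rule Least_le) (rule exI[of _ ws], simp)

lemma wl_0 [simp]: "word_len S 0 = 0"
  using wl_le[of "[]"] by simp

lemma wl_add: "word_len S (a + b) \<le> word_len S a + word_len S b"
proof -
  obtain ws1 where 1: "length ws1 = word_len S a" "set ws1 \<subseteq> S \<union> uminus ` S" "sum_list ws1 = a"
    using wl_ex by blast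
  obtain ws2 where 2: "length ws2 = word_len S b" "set ws2 \<subseteq> S \<union> uminus ` S" "sum_list ws2 = b"
    using wl_ex by blast
  have "word_len S (sum_list (ws1 @ ws2)) \<le> length (ws1 @ ws2)"
    by (rule wl_le) (use 1 2 in auto)
  then show ?thesis using 1 2 by simp
qed

lemma wl_uminus_le: "word_len S (- a) \<le> word_len S a"
proof -
  obtain ws where 1: "length ws = word_len S a" "set ws \<subseteq> S \<union> uminus ` S" "sum_list ws = a"
    using wl_ex by blast
  have "set (rev (map uminus ws)) \<subseteq> S \<union> uminus ` S"
    using 1(2) by force
  from wl_le[OF this] show ?thesis using 1 by (simp add: sum_list_rev_uminus)
qed

lemma wl_uminus [simp]: "word_len S (- a) = word_len S a"
  using wl_uminus_le[of a] wl_uminus_le[of "-a"] by simp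

lemma wl_split:
  assumes "k \<le> word_len S g"
  shows "\<exists>p. word_len S p = k \<and> word_len S (-p + g) = word_len S g - k"
proof -
  obtain ws where 1: "length ws = word_len S g" "set ws \<subseteq> S \<union> uminus ` S" "sum_list ws = g"
    using wl_ex by blast
  define p where "p = sum_list (take k ws)"
  have "sum_list ws = sum_list (take k ws) + sum_list (drop k ws)"
    by (subst append_take_drop_id[symmetric, of ws k], subst sum_list_append) simp
  then have g: "g = p + sum_list (drop k ws)"
    using 1(3) p_def by simp
  have st: "set (take k ws) \<subseteq> S \<union> uminus ` S" by (rule order_trans[OF set_take_subset 1(2)])
  have a: "word_len S p \<le> k"
    unfolding p_def using wl_le[OF st] 1(1) assms by simp
  have e: "-p + g = sum_list (drop k ws)" using g by (metis add_minus_cancel)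
  have sd: "set (drop k ws) \<subseteq> S \<union> uminus ` S" by (rule order_trans[OF set_drop_subset 1(2)])
  have b: "word_len S (-p + g) \<le> word_len S g - k"
    unfolding e using wl_le[OF sd] 1(1) by simp
  have "word_len S (p + (-p + g)) \<le> word_len S p + word_len S (-p + g)"
    by (rule wl_add)
  then have "word_len S g \<le> word_len S p + word_len S (-p + g)"
    by (metis add_minus_cancel)
  then show ?thesis using a b assms by (intro exI[of _ p]) auto
qed

lemma d_tri: "word_len S (-x + z) \<le> word_len S (-x + y) + word_len S (-y + z)"
  using wl_add[of "-x+y" "-y+z"] by (simp add: add.assoc)

lemma d_sym: "word_len S (-x + y) = word_len S (-y + x)"
  using wl_uminus[of "-x+y"] by (simp add: minus_add)

lemma d_inv: "word_len S (-(g + x) + (g + y)) = word_len S (-x + y)"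
proof -
  have "-(g + x) + (g + y) = -x + y" by (simp only: minus_add add.assoc) simp
  then show ?thesis by simp
qed


lemma wl_finite:
  assumes "finite S"
  shows "finite {g. word_len S g \<le> D}"
proof -
  have "{g. word_len S g \<le> D} \<subseteq> sum_list ` {ws. set ws \<subseteq> S \<union> uminus ` S \<and> length ws \<le> D}"
  proof
    fix g assume "g \<in> {g. word_len S g \<le> D}"
    moreover obtain ws where "length ws = word_len S g" "set ws \<subseteq> S \<union> uminus ` S" "sum_list ws = g"
      using wl_ex by blast
    ultimately show "g \<in> sum_list ` {ws. set ws \<subseteq> S \<union> uminus ` S \<and> length ws \<le> D}"
      by force
  qed
  moreover have "finite {ws. set ws \<subseteq> S \<union> uminus ` S \<and> length ws \<le> D}"
    by (rule finite_lists_length_le) (use assms in simp)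
  ultimately show ?thesis by (meson finite_imageI finite_subset)
qed

end

lemma card_jumps:
  fixes c :: "nat \<Rightarrow> nat"
  assumes mono: "\<forall>i j. i \<le> j \<longrightarrow> j \<le> m + k \<longrightarrow> c i \<le> c j"
    and bnd: "\<forall>i \<le> m + k. c i \<le> N"
  shows "card {i. i < m \<and> c i < c (i + k)} \<le> k * N"
proof -
  have id: "(\<Sum>i<M. int (c (i + k)) - int (c i)) = (\<Sum>i<k. int (c (M + i)) - int (c i))" for M
  proof (induction M)
    case 0 then show ?case by simp
  next
    case (Suc M)
    have a: "(\<Sum>i<Suc k. int (c (M + i))) = int (c M) + (\<Sum>i<k. int (c (Suc M + i)))"
      by (subst sum.lessThan_Suc_shift) simp
    have b: "(\<Sum>i<Suc k. int (c (M + i))) = (\<Sum>i<k. int (c (M + i))) + int (c (M + k))"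
      by simp
    have "(\<Sum>i<Suc M. int (c (i + k)) - int (c i)) = (\<Sum>i<k. int (c (M + i)) - int (c i)) + (int (c (M + k)) - int (c M))"
      using Suc by (simp add: add.commute)
    also have "\<dots> = (\<Sum>i<k. int (c (Suc M + i)) - int (c i))"
      using a b by (simp add: sum_subtractf)
    finally show ?case .
  qed
  define J where "J = {i. i < m \<and> c i < c (i + k)}"
  have fJ: "finite J" unfolding J_def by simp
  have "int (card J) = (\<Sum>i\<in>J. 1::int)" by simp
  also have "\<dots> \<le> (\<Sum>i\<in>J. int (c (i + k)) - int (c i))"
    by (rule sum_mono) (auto simp: J_def)
  also have "\<dots> \<le> (\<Sum>i<m. int (c (i + k)) - int (c i))"
    by (rule sum_mono2) (auto simp: J_def mono)
  also have "\<dots> = (\<Sum>i<k. int (c (m + i)) - int (c i))" by (rule id)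
  also have "\<dots> \<le> (\<Sum>i<k. int N)"
  proof (rule sum_mono)
    fix i assume "i \<in> {..<k}"
    then have "c (m + i) \<le> N" using bnd by simp
    then show "int (c (m + i)) - int (c i) \<le> int N" by simp
  qed
  also have "\<dots> = int (k * N)" by simp
  finally show ?thesis unfolding J_def by linarith
qed

definition Uf :: "'a set \<Rightarrow> 'a \<Rightarrow> real" where
  "Uf A x = (if x \<in> A then 1 / real (card A) else 0)"

lemma Uf_nonneg: "Uf A x \<ge> 0"
  unfolding Uf_def by simp

lemma Uf_sum_le:
  assumes "finite X"
  shows "(\<Sum>x\<in>X. Uf A x) \<le> 1"
proof (cases "finite A")
  case False
  then have c0: "card A = 0" by simp
  have "Uf A x = 0" for x unfolding Uf_def c0 by simp
  then show ?thesis by simp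
next
  case True
  have "(\<Sum>x\<in>X. Uf A x) = (\<Sum>x\<in>X \<inter> A. 1 / real (card A))"
    unfolding Uf_def using sum.inter_restrict[OF assms, of "\<lambda>x. 1 / real (card A)" A] by simp
  also have "\<dots> = real (card (X \<inter> A)) / real (card A)" by simp
  also have "\<dots> \<le> 1"
  proof (cases "card A = 0")
    case True then show ?thesis by simp
  next
    case False
    have "card (X \<inter> A) \<le> card A" using True by (simp add: card_mono)
    then show ?thesis using False by simp
  qed
  finally show ?thesis .
qed

lemma Uf_sum:
  assumes "finite A" "A \<noteq> {}" "A \<subseteq> X" "finite X"
  shows "(\<Sum>x\<in>X. Uf A x) = 1"
proof -
  have "(\<Sum>x\<in>X. Uf A x) = (\<Sum>x\<in>X \<inter> A. 1 / real (card A))"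
    unfolding Uf_def using sum.inter_restrict[OF assms(4), of "\<lambda>x. 1 / real (card A)" A] by simp
  also have "X \<inter> A = A" using assms by blast
  finally show ?thesis using assms by simp
qed

lemma Uf_diff:
  assumes "finite X"
  shows "(\<Sum>x\<in>X. \<bar>Uf A x - Uf B x\<bar>) \<le> 2"
proof -
  have "(\<Sum>x\<in>X. \<bar>Uf A x - Uf B x\<bar>) \<le> (\<Sum>x\<in>X. Uf A x + Uf B x)"
      proof (rule sum_mono)
    fix x show "\<bar>Uf A x - Uf B x\<bar> \<le> Uf A x + Uf B x"
      using Uf_nonneg[of A x] Uf_nonneg[of B x] by linarith
  qed
  also have "\<dots> = (\<Sum>x\<in>X. Uf A x) + (\<Sum>x\<in>X. Uf B x)" by (simp add: sum.distrib)
  also have "\<dots> \<le> 2" using Uf_sum_le[OF assms, of A] Uf_sum_le[OF assms, of B] by simp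
  finally show ?thesis .
qed

lemma window_shift_nat:
  fixes Q :: "int \<Rightarrow> 'b \<Rightarrow> real"
  assumes fX: "finite X" and Q: "\<And>t. (\<Sum>x\<in>X. \<bar>Q t x\<bar>) \<le> 1"
  shows "(\<Sum>x\<in>X. \<bar>(\<Sum>j<n. Q (a + int j) x) - (\<Sum>j<n. Q (a + int k + int j) x)\<bar>) \<le> 2 * real k"
proof (induction k)
  case 0 then show ?case by simp
next
  case (Suc k)
  define F where "F k x = (\<Sum>j<n. Q (a + int k + int j) x)" for k x
  have F0: "F 0 x = (\<Sum>j<n. Q (a + int j) x)" for x unfolding F_def by simp
  have tel: "F (Suc k) x - F k x = Q (a + int k + int n) x - Q (a + int k) x" for x
  proof -
    have "F (Suc k) x - F k x = (\<Sum>j<n. Q (a + int k + int (Suc j)) x - Q (a + int k + int j) x)"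
      unfolding F_def by (simp add: sum_subtractf ac_simps)
    also have "\<dots> = Q (a + int k + int n) x - Q (a + int k + int 0) x"
      by (rule sum_lessThan_telescope)
    finally show ?thesis by simp
  qed
  have "(\<Sum>x\<in>X. \<bar>F 0 x - F (Suc k) x\<bar>) \<le> (\<Sum>x\<in>X. \<bar>F 0 x - F k x\<bar> + (\<bar>Q (a + int k + int n) x\<bar> + \<bar>Q (a + int k) x\<bar>))"
  proof (rule sum_mono)
    fix x
    have "\<bar>F 0 x - F (Suc k) x\<bar> \<le> \<bar>F 0 x - F k x\<bar> + \<bar>F (Suc k) x - F k x\<bar>" by linarith
    then show "\<bar>F 0 x - F (Suc k) x\<bar> \<le> \<bar>F 0 x - F k x\<bar> + (\<bar>Q (a + int k + int n) x\<bar> + \<bar>Q (a + int k) x\<bar>)"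
      unfolding tel by linarith
  qed
  also have "\<dots> = (\<Sum>x\<in>X. \<bar>F 0 x - F k x\<bar>) + (\<Sum>x\<in>X. \<bar>Q (a + int k + int n) x\<bar>) + (\<Sum>x\<in>X. \<bar>Q (a + int k) x\<bar>)"
    by (simp add: sum.distrib)
  also have "\<dots> \<le> 2 * real k + 1 + 1"
    using Suc.IH Q[of "a + int k + int n"] Q[of "a + int k"] unfolding F_def by simp
  finally show ?case unfolding F_def by simp
qed

lemma window_shift:
  fixes Q :: "int \<Rightarrow> 'b \<Rightarrow> real"
  assumes fX: "finite X" and Q: "\<And>t. (\<Sum>x\<in>X. \<bar>Q t x\<bar>) \<le> 1"
  shows "(\<Sum>x\<in>X. \<bar>(\<Sum>j<n. Q (a + int j) x) - (\<Sum>j<n. Q (a + s + int j) x)\<bar>) \<le> 2 * \<bar>s\<bar>"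
proof (cases "s \<ge> 0")
  case True
  define k where "k = nat s"
  have k: "s = int k" using True by (simp add: k_def)
  show ?thesis using window_shift_nat[OF fX Q, where n=n and a=a and k=k] k by simp
next
  case False
  define k where "k = nat (- s)"
  have k: "s = - int k" using False by (simp add: k_def)
  have "(\<Sum>x\<in>X. \<bar>(\<Sum>j<n. Q ((a + s) + int j) x) - (\<Sum>j<n. Q ((a + s) + int k + int j) x)\<bar>) \<le> 2 * real k"
    by (rule window_shift_nat[OF fX Q])
  then show ?thesis using k by (simp add: abs_minus_commute)
qed

definition horo :: "'a::group_add set \<Rightarrow> ('a \<Rightarrow> int) \<Rightarrow> bool" where
  "horo S h \<longleftrightarrow> (\<forall>Z K. finite Z \<longrightarrow> finite K \<longrightarrow>
      (\<exists>w. w \<notin> K \<and> (\<forall>z\<in>Z. h z = int (word_len S (-w)) - int (word_len S (-w + z)))))"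

definition Wset :: "'a::group_add set \<Rightarrow> ('a \<Rightarrow> int) \<Rightarrow> 'a \<Rightarrow> nat \<Rightarrow> int \<Rightarrow> 'a set" where
  "Wset S h b R t = {v. h v = t \<and> (\<exists>u. word_len S (-b + u) \<le> R \<and> int (word_len S (-u + v)) + h u = t)}"

definition Mm :: "'a::group_add set \<Rightarrow> nat \<Rightarrow> nat \<Rightarrow> nat \<Rightarrow> ('a \<Rightarrow> int) \<Rightarrow> 'a \<Rightarrow> 'a \<Rightarrow> real" where
  "Mm S' n L T h b x = (\<Sum>R\<in>{1..L}. \<Sum>j<n. Uf (Wset S' h b R (h b + int T + int j)) x) / real (n * L)"

context
  fixes S :: "'a::group_add set"
  assumes gen: "generates S"
begin

lemma horo_0: "horo S h \<Longrightarrow> h 0 = 0"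
  unfolding horo_def by (drule spec[of _ "{0}"], drule spec[of _ "{}"]) auto

lemma horo_lip:
  assumes "horo S h"
  shows "h z' - h z \<le> int (word_len S (-z + z'))"
proof -
  obtain w where w: "\<forall>x\<in>{z,z'}. h x = int (word_len S (-w)) - int (word_len S (-w + x))"
    using assms unfolding horo_def by (metis finite.emptyI finite.insertI)
  have "word_len S (-w + z) \<le> word_len S (-w + z') + word_len S (-z' + z)"
    by (rule d_tri[OF gen])
  moreover have "word_len S (-z' + z) = word_len S (-z + z')" by (rule d_sym[OF gen])
  ultimately show ?thesis using w by simp
qed

lemma horo_asc:
  assumes "horo S h" "finite S"
  shows "\<exists>v. word_len S (-b + v) = k \<and> h v = h b + int k"
proof -
  define B where "B = (\<lambda>g. b + g) ` {g. word_len S g \<le> k}"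
  have fB: "finite B" unfolding B_def using wl_finite[OF gen assms(2)] by simp
  obtain w where w: "w \<notin> B" "\<forall>x\<in>insert b B. h x = int (word_len S (-w)) - int (word_len S (-w + x))"
    using assms(1) fB unfolding horo_def by blast
  have "\<not> word_len S (-b + w) \<le> k"
  proof
    assume "word_len S (-b + w) \<le> k"
    then have "b + (-b + w) \<in> B" unfolding B_def by blast
    then show False using w(1) by (simp add: add.assoc[symmetric])
  qed
  then have kle: "k \<le> word_len S (-b + w)" by simp
  obtain p where p: "word_len S p = k" "word_len S (-p + (-b + w)) = word_len S (-b + w) - k"
    using wl_split[OF gen kle] by blast
  define v where "v = b + p"
  have vB: "v \<in> B" unfolding B_def v_def using p(1) by blast
  have "-v + w = -p + (-b + w)" unfolding v_def by (simp only: minus_add add.assoc)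
  then have dv: "word_len S (-w + v) = word_len S (-b + w) - k"
    using p(2) d_sym[OF gen, of w v] by simp
  have db: "word_len S (-w + b) = word_len S (-b + w)" by (rule d_sym[OF gen])
  have "h v = int (word_len S (-w)) - int (word_len S (-w + v))" using w(2) vB by blast
  moreover have "h b = int (word_len S (-w)) - int (word_len S (-w + b))" using w(2) by blast
  ultimately have "h v = h b + int k" using dv db kle by simp
  moreover have "word_len S (-b + v) = k" unfolding v_def using p(1) by (simp add: add.assoc[symmetric])
  ultimately show ?thesis by blast
qed

lemma W_mono: "R \<le> R' \<Longrightarrow> Wset S h b R t \<subseteq> Wset S h b R' t"
  unfolding Wset_def using le_trans by fastforce

lemma W_shift:
  assumes "word_len S (-b' + b) \<le> r"
  shows "Wset S h b R t \<subseteq> Wset S h b' (R + r) t"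
proof
  fix v assume "v \<in> Wset S h b R t"
  then obtain u where u: "h v = t" "word_len S (-b + u) \<le> R" "int (word_len S (-u + v)) + h u = t"
    unfolding Wset_def by blast
  have "word_len S (-b' + u) \<le> word_len S (-b' + b) + word_len S (-b + u)" by (rule d_tri[OF gen])
  then have "word_len S (-b' + u) \<le> R + r" using u(2) assms by simp
  then show "v \<in> Wset S h b' (R + r) t" unfolding Wset_def using u by blast
qed

lemma W_ne:
  assumes "horo S h" "finite S" "h b \<le> t"
  shows "Wset S h b R t \<noteq> {}"
proof -
  obtain v where v: "word_len S (-b + v) = nat (t - h b)" "h v = h b + int (nat (t - h b))"
    using horo_asc[OF assms(1,2)] by blast
  have "v \<in> Wset S h b R t" unfolding Wset_def using v assms(3) by (intro CollectI conjI exI[of _ b]) (auto simp: wl_0[OF gen])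
  then show ?thesis by blast
qed

lemma W_diam:
  assumes hh: "horo S h"
    and hyp: "\<forall>x y z w. gromov_prod S x z w \<ge> min (gromov_prod S x y w) (gromov_prod S y z w) - \<delta>"
    and tR: "h b + 2 * int R \<le> t"
    and vW: "v \<in> Wset S h b R t" and v'W: "v' \<in> Wset S h b R t"
  shows "real (word_len S (-v + v')) \<le> 4 * \<delta>"
proof -
  obtain u where u: "h v = t" "word_len S (-b + u) \<le> R" "int (word_len S (-u + v)) + h u = t"
    using vW unfolding Wset_def by blast
  obtain u' where u': "h v' = t" "word_len S (-b + u') \<le> R" "int (word_len S (-u' + v')) + h u' = t"
    using v'W unfolding Wset_def by blast
  have d0: "\<delta> \<ge> 0" using hyp[rule_format, of v v v v] by simp
  obtain w where w: "\<forall>x\<in>{u,u',v,v'}. h x = int (word_len S (-w)) - int (word_len S (-w + x))"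
    using hh unfolding horo_def by (metis finite.emptyI finite.insertI)
  define D0 where "D0 = real (word_len S (-w))"
  have wd: "word_dist S x w = D0 - real_of_int (h x)" if "x \<in> {u,u',v,v'}" for x
  proof -
    have "word_len S (-x + w) = word_len S (-w + x)" by (rule d_sym[OF gen])
    then show ?thesis using w that unfolding word_dist_def D0_def by force
  qed
  have lu: "h u \<le> h b + int R" using horo_lip[OF hh, of u b] u(2) by simp
  have lu': "h u' \<le> h b + int R" using horo_lip[OF hh, of u' b] u'(2) by simp
  have duu: "word_len S (-u + u') \<le> 2 * R"
  proof -
    have "word_len S (-u + u') \<le> word_len S (-u + b) + word_len S (-b + u')" by (rule d_tri[OF gen])
    moreover have "word_len S (-u + b) = word_len S (-b + u)" by (rule d_sym[OF gen])
    ultimately show ?thesis using u(2) u'(2) by simp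
  qed
  have dvu: "word_dist S v u = real_of_int (t - h u)"
    using u(3) d_sym[OF gen, of v u] unfolding word_dist_def by simp
  have du'v': "word_dist S u' v' = real_of_int (t - h u')"
    using u'(3) unfolding word_dist_def by simp
  have g1: "gromov_prod S v u w = D0 - t"
    unfolding gromov_prod_def using wd[of v] wd[of u] dvu u(1) by simp
  have g2: "gromov_prod S u u' w \<ge> D0 - t"
    unfolding gromov_prod_def using wd[of u] wd[of u'] duu lu lu' tR unfolding word_dist_def by simp
  have g3: "gromov_prod S u' v' w = D0 - t"
    unfolding gromov_prod_def using wd[of u'] wd[of v'] du'v' u'(1) by simp
  have g4: "gromov_prod S v u' w \<ge> D0 - t - \<delta>"
  proof -
    have "gromov_prod S v u' w \<ge> min (gromov_prod S v u w) (gromov_prod S u u' w) - \<delta>"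
      using hyp by blast
    moreover have "min (gromov_prod S v u w) (gromov_prod S u u' w) \<ge> D0 - t"
      using g1 g2 by simp
    ultimately show ?thesis by linarith
  qed
  have g5: "gromov_prod S v v' w \<ge> D0 - t - 2 * \<delta>"
  proof -
    have "gromov_prod S v v' w \<ge> min (gromov_prod S v u' w) (gromov_prod S u' v' w) - \<delta>"
      using hyp by blast
    moreover have "min (gromov_prod S v u' w) (gromov_prod S u' v' w) \<ge> D0 - t - \<delta>"
      using g3 g4 d0 by simp
    ultimately show ?thesis by linarith
  qed
  have "word_dist S v v' = word_dist S v w + word_dist S v' w - 2 * gromov_prod S v v' w"
    unfolding gromov_prod_def by (simp add: field_simps)
  also have "\<dots> \<le> 4 * \<delta>" using wd[of v] wd[of v'] u(1) u'(1) g5 by simp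
  finally show ?thesis unfolding word_dist_def .
qed


lemma nat_le_ceil: "real n \<le> x \<Longrightarrow> n \<le> nat \<lceil>x\<rceil>"
proof -
  assume "real n \<le> x"
  then have "\<lceil>real n\<rceil> \<le> \<lceil>x\<rceil>" by (rule ceiling_mono)
  then have "int n \<le> \<lceil>x\<rceil>" by simp
  then show ?thesis by simp
qed

lemma W_card:
  assumes hh: "horo S h" and fS: "finite S"
    and hyp: "\<forall>x y z w. gromov_prod S x z w \<ge> min (gromov_prod S x y w) (gromov_prod S y z w) - \<delta>"
    and tR: "h b + 2 * int R \<le> t"
  shows "finite (Wset S h b R t) \<and> card (Wset S h b R t) \<le> card {g. word_len S g \<le> nat \<lceil>4 * \<delta>\<rceil>}"
proof (cases "Wset S h b R t = {}")
  case True then show ?thesis by simp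
next
  case False
  then obtain v0 where v0: "v0 \<in> Wset S h b R t" by blast
  let ?B = "{g. word_len S g \<le> nat \<lceil>4 * \<delta>\<rceil>}"
  have fB: "finite ?B" by (rule wl_finite[OF gen fS])
  have sub: "Wset S h b R t \<subseteq> (\<lambda>g. v0 + g) ` ?B"
  proof
    fix v assume v: "v \<in> Wset S h b R t"
    have "real (word_len S (-v0 + v)) \<le> 4 * \<delta>" by (rule W_diam[OF hh hyp tR v0 v])
    then have "-v0 + v \<in> ?B" by (simp add: nat_le_ceil)
    moreover have "v = v0 + (-v0 + v)" by (simp add: add.assoc[symmetric])
    ultimately show "v \<in> (\<lambda>g. v0 + g) ` ?B" by blast
  qed
  have "finite ((\<lambda>g. v0 + g) ` ?B)" using fB by simp
  moreover have "card ((\<lambda>g. v0 + g) ` ?B) \<le> card ?B" by (rule card_image_le[OF fB])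
  ultimately show ?thesis using sub by (meson card_mono finite_subset le_trans)
qed

lemma bad_count:
  assumes hh: "horo S h" and fS: "finite S"
    and hyp: "\<forall>x y z w. gromov_prod S x z w \<ge> min (gromov_prod S x y w) (gromov_prod S y z w) - \<delta>"
    and r1: "word_len S (-b' + b) \<le> r" and r2: "word_len S (-b + b') \<le> r"
    and tt: "h b + 2 * int (L + 2 * r + 1) \<le> t"
  shows "card {R \<in> {1..L}. Wset S h b R t \<noteq> Wset S h b' R t}
          \<le> r + 2 * r * card {g. word_len S g \<le> nat \<lceil>4 * \<delta>\<rceil>}"
proof -
  define N where "N = card {g. word_len S g \<le> nat \<lceil>4 * \<delta>\<rceil>}"
  define c where "c i = card (Wset S h b i t)" for i
  have fin: "finite (Wset S h b i t)" and cN: "c i \<le> N" if "i \<le> L + 1 + 2 * r" for i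
  proof -
    have "h b + 2 * int i \<le> h b + 2 * int (L + 2 * r + 1)" using that by simp
    then have "h b + 2 * int i \<le> t" using tt by (rule order_trans)
    from W_card[OF hh fS hyp this] show "finite (Wset S h b i t)" "c i \<le> N"
      unfolding c_def N_def by auto
  qed
  have mono: "\<forall>i j. i \<le> j \<longrightarrow> j \<le> (L + 1) + 2 * r \<longrightarrow> c i \<le> c j"
    unfolding c_def using fin W_mono by (meson card_mono)
  have jumps: "card {i. i < L + 1 \<and> c i < c (i + 2 * r)} \<le> 2 * r * N"
    by (rule card_jumps) (use mono cN in auto)
  have sub: "{R \<in> {1..L}. Wset S h b R t \<noteq> Wset S h b' R t}
      \<subseteq> {R. R < r} \<union> (\<lambda>i. i + r) ` {i. i < L + 1 \<and> c i < c (i + 2 * r)}"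
  proof
    fix R assume R: "R \<in> {R \<in> {1..L}. Wset S h b R t \<noteq> Wset S h b' R t}"
    show "R \<in> {R. R < r} \<union> (\<lambda>i. i + r) ` {i. i < L + 1 \<and> c i < c (i + 2 * r)}"
    proof (cases "R < r")
      case True then show ?thesis by simp
    next
      case False
      define i where "i = R - r"
      have Ri: "R = i + r" using False i_def by simp
      have s1: "Wset S h b i t \<subseteq> Wset S h b' R t" using W_shift[OF r1, of h i t] Ri by simp
      have s2: "Wset S h b' R t \<subseteq> Wset S h b (i + 2 * r) t"
        using W_shift[OF r2, of h R t] Ri by (simp add: mult_2 add.assoc)
      have s3: "Wset S h b i t \<subseteq> Wset S h b R t" using W_mono Ri by simp
      have s4: "Wset S h b R t \<subseteq> Wset S h b (i + 2 * r) t" using W_mono Ri by simp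
      have iL: "i < L + 1" using R Ri by auto
      have f2: "finite (Wset S h b (i + 2 * r) t)" using fin iL by simp
      have "c i < c (i + 2 * r)"
      proof (rule ccontr)
        assume "\<not> c i < c (i + 2 * r)"
        moreover have "c i \<le> c (i + 2 * r)" using mono iL by simp
        ultimately have "c i = c (i + 2 * r)" by simp
        then have "Wset S h b i t = Wset S h b (i + 2 * r) t"
          unfolding c_def using f2 s3 s4 by (metis card_subset_eq order_trans)
        then have "Wset S h b R t = Wset S h b' R t" using s1 s2 s3 s4 by blast
        then show False using R by simp
      qed
      then show ?thesis using Ri iL by blast
    qed
  qed
  have "card {R \<in> {1..L}. Wset S h b R t \<noteq> Wset S h b' R t}
      \<le> card ({R. R < r} \<union> (\<lambda>i. i + r) ` {i. i < L + 1 \<and> c i < c (i + 2 * r)})"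
    by (rule card_mono[OF _ sub]) auto
  also have "\<dots> \<le> card {R. R < r} + card ((\<lambda>i. i + r) ` {i. i < L + 1 \<and> c i < c (i + 2 * r)})"
    by (rule card_Un_le)
  also have "\<dots> \<le> r + card {i. i < L + 1 \<and> c i < c (i + 2 * r)}"
    using card_image_le[of "{i. i < L + 1 \<and> c i < c (i + 2 * r)}" "\<lambda>i. i + r"] by simp
  also have "\<dots> \<le> r + 2 * r * N" using jumps by simp
  finally show ?thesis unfolding N_def .
qed



lemma M_est:
  assumes hh: "horo S h" and fS: "finite S"
    and hyp: "\<forall>x y z w. gromov_prod S x z w \<ge> min (gromov_prod S x y w) (gromov_prod S y z w) - \<delta>"
    and r1: "word_len S (-b' + b) \<le> r" and r2: "word_len S (-b + b') \<le> r"
    and TT: "T = 2 * (L + 2 * r + 1)" and fX: "finite X" and n0: "n > 0" and L0: "L > 0"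
  shows "(\<Sum>x\<in>X. \<bar>Mm S n L T h b x - Mm S n L T h b' x\<bar>)
     \<le> 2 * (real r + 2 * real r * real (card {g. word_len S g \<le> nat \<lceil>4 * \<delta>\<rceil>})) / real L + 2 * real r / real n"
proof -
  define N where "N = card {g. word_len S g \<le> nat \<lceil>4 * \<delta>\<rceil>}"
  define a where "a = h b + int T"
  define s where "s = h b' - h b"
  have s1: "h b' - h b \<le> int r" using horo_lip[OF hh, of b' b] r2 by simp
  have s2: "h b - h b' \<le> int r" using horo_lip[OF hh, of b b'] r1 by simp
  have sabs: "\<bar>s\<bar> \<le> int r" using s1 s2 unfolding s_def by simp
  define P where "P R t x = Uf (Wset S h b R t) x" for R t x
  define Q where "Q R t x = Uf (Wset S h b' R t) x" for R t x
  have Mb: "Mm S n L T h b x = (\<Sum>R\<in>{1..L}. \<Sum>j<n. P R (a + int j) x) / real (n * L)" for x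
    unfolding Mm_def P_def a_def ..
  have Mb': "Mm S n L T h b' x = (\<Sum>R\<in>{1..L}. \<Sum>j<n. Q R (a + s + int j) x) / real (n * L)" for x
  proof -
    have "h b' + int T + int j = a + s + int j" for j unfolding a_def s_def by simp
    then show ?thesis unfolding Mm_def Q_def by simp
  qed
  define A where "A x = (\<Sum>R\<in>{1..L}. \<Sum>j<n. P R (a + int j) x - Q R (a + int j) x)" for x
  define B where "B x = (\<Sum>R\<in>{1..L}. (\<Sum>j<n. Q R (a + int j) x) - (\<Sum>j<n. Q R (a + s + int j) x))" for x
  have AB: "Mm S n L T h b x - Mm S n L T h b' x = (A x + B x) / real (n * L)" for x
  proof -
    have 1: "A x = (\<Sum>R\<in>{1..L}. \<Sum>j<n. P R (a + int j) x) - (\<Sum>R\<in>{1..L}. \<Sum>j<n. Q R (a + int j) x)"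
      unfolding A_def by (simp add: sum_subtractf)
    have 2: "B x = (\<Sum>R\<in>{1..L}. \<Sum>j<n. Q R (a + int j) x) - (\<Sum>R\<in>{1..L}. \<Sum>j<n. Q R (a + s + int j) x)"
      unfolding B_def by (simp add: sum_subtractf)
    show ?thesis unfolding Mb Mb' using 1 2 by (simp add: diff_divide_distrib add_divide_distrib)
  qed
  have QX: "(\<Sum>x\<in>X. \<bar>Q R t x\<bar>) \<le> 1" for R t
    unfolding Q_def using Uf_sum_le[OF fX, of "Wset S h b' R t"] by (simp add: abs_of_nonneg Uf_nonneg)
  have badj: "(\<Sum>R\<in>{1..L}. \<Sum>x\<in>X. \<bar>P R (a + int j) x - Q R (a + int j) x\<bar>) \<le> 2 * (real r + 2 * real r * real N)" for j
  proof -
    let ?t = "a + int j"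
    have "(\<Sum>R\<in>{1..L}. \<Sum>x\<in>X. \<bar>P R ?t x - Q R ?t x\<bar>)
        \<le> (\<Sum>R\<in>{1..L}. if Wset S h b R ?t \<noteq> Wset S h b' R ?t then 2 else 0)"
    proof (rule sum_mono)
      fix R
      show "(\<Sum>x\<in>X. \<bar>P R ?t x - Q R ?t x\<bar>) \<le> (if Wset S h b R ?t \<noteq> Wset S h b' R ?t then 2 else 0)"
        unfolding P_def Q_def using Uf_diff[OF fX] by auto
    qed
    also have "\<dots> = 2 * real (card {R \<in> {1..L}. Wset S h b R ?t \<noteq> Wset S h b' R ?t})"
      by (simp add: sum.inter_filter[symmetric])
    also have "\<dots> \<le> 2 * real (r + 2 * r * N)"
    proof -
      have "h b + 2 * int (L + 2 * r + 1) \<le> ?t" unfolding a_def TT by simp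
      from bad_count[OF hh fS hyp r1 r2 this]
      have "card {R \<in> {1..L}. Wset S h b R ?t \<noteq> Wset S h b' R ?t} \<le> r + 2 * r * N"
        unfolding N_def .
      then have "real (card {R \<in> {1..L}. Wset S h b R ?t \<noteq> Wset S h b' R ?t}) \<le> real (r + 2 * r * N)"
        by (simp only: of_nat_le_iff)
      then show ?thesis by simp
    qed
    finally show ?thesis by simp
  qed
  have Asum: "(\<Sum>x\<in>X. \<bar>A x\<bar>) \<le> real n * (2 * (real r + 2 * real r * real N))"
  proof -
    have "(\<Sum>x\<in>X. \<bar>A x\<bar>) \<le> (\<Sum>x\<in>X. \<Sum>R\<in>{1..L}. \<Sum>j<n. \<bar>P R (a + int j) x - Q R (a + int j) x\<bar>)"
    proof (rule sum_mono)
      fix x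
      have "\<bar>A x\<bar> \<le> (\<Sum>R\<in>{1..L}. \<bar>\<Sum>j<n. P R (a + int j) x - Q R (a + int j) x\<bar>)"
        unfolding A_def by (rule sum_abs)
      also have "\<dots> \<le> (\<Sum>R\<in>{1..L}. \<Sum>j<n. \<bar>P R (a + int j) x - Q R (a + int j) x\<bar>)"
        by (rule sum_mono) (rule sum_abs)
      finally show "\<bar>A x\<bar> \<le> (\<Sum>R\<in>{1..L}. \<Sum>j<n. \<bar>P R (a + int j) x - Q R (a + int j) x\<bar>)" .
    qed
    also have "\<dots> = (\<Sum>j<n. \<Sum>R\<in>{1..L}. \<Sum>x\<in>X. \<bar>P R (a + int j) x - Q R (a + int j) x\<bar>)"
      by (subst sum.swap) (subst (2) sum.swap, rule sum.cong, simp, subst sum.swap, simp)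
    also have "\<dots> \<le> (\<Sum>j<n. 2 * (real r + 2 * real r * real N))"
      by (rule sum_mono) (rule badj)
    also have "\<dots> = real n * (2 * (real r + 2 * real r * real N))" by simp
    finally show ?thesis .
  qed
  have Bsum: "(\<Sum>x\<in>X. \<bar>B x\<bar>) \<le> real L * (2 * real r)"
  proof -
    have "(\<Sum>x\<in>X. \<bar>B x\<bar>) \<le> (\<Sum>x\<in>X. \<Sum>R\<in>{1..L}. \<bar>(\<Sum>j<n. Q R (a + int j) x) - (\<Sum>j<n. Q R (a + s + int j) x)\<bar>)"
      unfolding B_def by (rule sum_mono) (rule sum_abs)
    also have "\<dots> = (\<Sum>R\<in>{1..L}. \<Sum>x\<in>X. \<bar>(\<Sum>j<n. Q R (a + int j) x) - (\<Sum>j<n. Q R (a + s + int j) x)\<bar>)"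
      by (rule sum.swap)
    also have "\<dots> \<le> (\<Sum>R\<in>{1..L}. 2 * real r)"
    proof (rule sum_mono)
      fix R
      have "(\<Sum>x\<in>X. \<bar>(\<Sum>j<n. Q R (a + int j) x) - (\<Sum>j<n. Q R (a + s + int j) x)\<bar>) \<le> 2 * \<bar>s\<bar>"
        by (rule window_shift[OF fX QX])
      also have "\<dots> \<le> 2 * real r" using sabs by simp
      finally show "(\<Sum>x\<in>X. \<bar>(\<Sum>j<n. Q R (a + int j) x) - (\<Sum>j<n. Q R (a + s + int j) x)\<bar>) \<le> 2 * real r" .
    qed
    also have "\<dots> = real L * (2 * real r)" by simp
    finally show ?thesis .
  qed
  have nL: "real (n * L) > 0" using n0 L0 by simp
  have "(\<Sum>x\<in>X. \<bar>Mm S n L T h b x - Mm S n L T h b' x\<bar>) = (\<Sum>x\<in>X. \<bar>A x + B x\<bar>) / real (n * L)"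
    unfolding AB by (simp add: sum_divide_distrib)
  also have "\<dots> \<le> ((\<Sum>x\<in>X. \<bar>A x\<bar>) + (\<Sum>x\<in>X. \<bar>B x\<bar>)) / real (n * L)"
  proof (rule divide_right_mono)
    have "(\<Sum>x\<in>X. \<bar>A x + B x\<bar>) \<le> (\<Sum>x\<in>X. \<bar>A x\<bar> + \<bar>B x\<bar>)" by (rule sum_mono) (rule abs_triangle_ineq)
    then show "(\<Sum>x\<in>X. \<bar>A x + B x\<bar>) \<le> (\<Sum>x\<in>X. \<bar>A x\<bar>) + (\<Sum>x\<in>X. \<bar>B x\<bar>)" by (simp add: sum.distrib)
  qed simp
  also have "\<dots> \<le> (real n * (2 * (real r + 2 * real r * real N)) + real L * (2 * real r)) / real (n * L)"
    by (rule divide_right_mono) (use Asum Bsum in simp_all)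
  also have "\<dots> = 2 * (real r + 2 * real r * real N) / real L + 2 * real r / real n"
    using n0 L0 by (simp add: field_simps)
  finally show ?thesis unfolding N_def .
qed

end

lemma cstar_approx:
  assumes "f \<in> cstar_alg S" "e > 0"
  shows "\<exists>h\<in>star_alg (gen_set S). \<forall>x. cmod (f x - h x) \<le> e"
  using assms unfolding cstar_alg_def by auto

definition bnd :: "('a \<Rightarrow> complex) \<Rightarrow> bool" where
  "bnd f \<longleftrightarrow> (\<exists>B. \<forall>x. cmod (f x) \<le> B)"

lemma bnd_vanish:
  assumes "f \<in> vanish_at_infinity"
  shows "bnd f"
proof -
  have fin: "finite {x. 1 \<le> cmod (f x)}" using assms unfolding vanish_at_infinity_def by simp
  define B where "B = 1 + (\<Sum>x\<in>{x. 1 \<le> cmod (f x)}. cmod (f x))"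
  have "cmod (f x) \<le> B" for x
  proof (cases "1 \<le> cmod (f x)")
    case True
    then have "cmod (f x) \<le> (\<Sum>x\<in>{x. 1 \<le> cmod (f x)}. cmod (f x))"
      using fin by (intro member_le_sum) auto
    then show ?thesis unfolding B_def by simp
  next
    case False
    have "0 \<le> (\<Sum>x\<in>{x. 1 \<le> cmod (f x)}. cmod (f x))" by (rule sum_nonneg) simp
    then show ?thesis using False unfolding B_def by simp
  qed
  then show ?thesis unfolding bnd_def by blast
qed

context
  fixes S :: "'a::group_add set"
  assumes gen: "generates S"
begin

lemma busemann_bnd: "cmod (busemann S z x) \<le> real (word_len S z)"
proof -
  have a: "word_len S (-x + z) \<le> word_len S (-x) + word_len S z"
    by (rule wl_add[OF gen])
  have b: "word_len S (-x) \<le> word_len S (-x + z) + word_len S (-z)"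
    using wl_add[OF gen, of "-x + z" "-z"] by (simp add: add.assoc)
  have "\<bar>real (word_len S (-x)) - real (word_len S (-x + z))\<bar> \<le> real (word_len S z)"
    using a b wl_uminus[OF gen, of z] by linarith
  moreover have "cmod (busemann S z x) = \<bar>real (word_len S (-x)) - real (word_len S (-x + z))\<bar>"
    unfolding busemann_def word_dist_def norm_of_real by simp
  ultimately show ?thesis by simp
qed

lemma gen_bnd: "f \<in> gen_set S \<Longrightarrow> bnd f"
  unfolding gen_set_def
proof (elim UnE)
  assume "f \<in> vanish_at_infinity" then show "bnd f" by (rule bnd_vanish)
next
  assume "f \<in> range (\<lambda>c x. c)" then show "bnd f" unfolding bnd_def by auto
next
  assume "f \<in> range (busemann S)"
  then obtain z where "f = busemann S z" by blast
  then show "bnd f" unfolding bnd_def using busemann_bnd by blast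
qed

lemma star_bnd: "f \<in> star_alg (gen_set S) \<Longrightarrow> bnd f"
proof (induction rule: star_alg.induct)
  case (gen f) then show ?case by (rule gen_bnd)
next
  case (add f g)
  then obtain B1 B2 where "\<forall>x. cmod (f x) \<le> B1" "\<forall>x. cmod (g x) \<le> B2" unfolding bnd_def by blast
  then have "\<forall>x. cmod (f x + g x) \<le> B1 + B2" by (metis add_mono norm_triangle_le)
  then show ?case unfolding bnd_def by blast
next
  case (mult f g)
  then obtain B1 B2 where B: "\<forall>x. cmod (f x) \<le> B1" "\<forall>x. cmod (g x) \<le> B2" unfolding bnd_def by blast
  have "cmod (f x * g x) \<le> B1 * B2" for x
    unfolding norm_mult using B by (meson mult_mono norm_ge_zero order_trans)
  then show ?case unfolding bnd_def by blast
next
  case (scal f c)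
  then obtain B where B: "\<forall>x. cmod (f x) \<le> B" unfolding bnd_def by blast
  have "cmod (c * f x) \<le> cmod c * B" for x
    unfolding norm_mult using B by (simp add: mult_left_mono)
  then show ?case unfolding bnd_def by blast
next
  case (conj f)
  then show ?case unfolding bnd_def by simp
qed

lemma cstar_bnd: "f \<in> cstar_alg S \<Longrightarrow> bnd f"
proof -
  assume "f \<in> cstar_alg S"
  then obtain h where h: "h \<in> star_alg (gen_set S)" "\<forall>x. cmod (f x - h x) \<le> 1"
    using cstar_approx[of f S 1] by auto
  obtain B where B: "\<forall>x. cmod (h x) \<le> B" using star_bnd[OF h(1)] unfolding bnd_def by blast
  have "cmod (f x) \<le> B + 1" for x
    using h(2) B norm_triangle_ineq2[of "f x" "h x"] by (smt (verit))
  then show "bnd f" unfolding bnd_def by blast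
qed

end

lemma star_cstar: "f \<in> star_alg (gen_set S) \<Longrightarrow> f \<in> cstar_alg S"
  unfolding cstar_alg_def by force

lemma cstar_limit:
  assumes "\<And>e. e > 0 \<Longrightarrow> \<exists>f\<in>cstar_alg S. \<forall>x. cmod (F x - f x) \<le> e"
  shows "F \<in> cstar_alg S"
  unfolding cstar_alg_def
proof (intro CollectI allI impI)
  fix e :: real assume e: "e > 0"
  have e2: "e / 2 > 0" using e by simp
  obtain f where f: "f \<in> cstar_alg S" "\<forall>x. cmod (F x - f x) \<le> e / 2" using assms[OF e2] by blast
  obtain h where h: "h \<in> star_alg (gen_set S)" "\<forall>x. cmod (f x - h x) \<le> e / 2"
    using cstar_approx[OF f(1) e2] by blast
  have "cmod (F x - h x) \<le> e" for x
  proof -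
    have "F x - h x = (F x - f x) + (f x - h x)" by simp
    then have "cmod (F x - h x) \<le> cmod (F x - f x) + cmod (f x - h x)" by (metis norm_triangle_ineq)
    then show ?thesis using f(2)[rule_format, of x] h(2)[rule_format, of x] by linarith
  qed
  then show "\<exists>h\<in>star_alg (gen_set S). \<forall>x. cmod (F x - h x) \<le> e" using h(1) by blast
qed

lemma cstar_const: "(\<lambda>x. c) \<in> cstar_alg S"
proof (rule star_cstar, rule star_alg.gen)
  show "(\<lambda>x. c) \<in> gen_set S" unfolding gen_set_def
    by (rule UnI1, rule UnI2, rule image_eqI[where x=c]) simp_all
qed

lemma cstar_add:
  assumes "f \<in> cstar_alg S" "g \<in> cstar_alg S"
  shows "(\<lambda>x. f x + g x) \<in> cstar_alg S"
  unfolding cstar_alg_def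
proof (intro CollectI allI impI)
  fix e :: real assume e: "e > 0"
  obtain h1 where h1: "h1 \<in> star_alg (gen_set S)" "\<forall>x. cmod (f x - h1 x) \<le> e / 2"
    using cstar_approx[OF assms(1)] e by (meson half_gt_zero)
  obtain h2 where h2: "h2 \<in> star_alg (gen_set S)" "\<forall>x. cmod (g x - h2 x) \<le> e / 2"
    using cstar_approx[OF assms(2)] e by (meson half_gt_zero)
  have "cmod (f x + g x - (h1 x + h2 x)) \<le> e" for x
  proof -
    have "cmod (f x + g x - (h1 x + h2 x)) = cmod ((f x - h1 x) + (g x - h2 x))" by (simp add: algebra_simps)
    also have "\<dots> \<le> cmod (f x - h1 x) + cmod (g x - h2 x)" by (rule norm_triangle_ineq)
    finally show ?thesis using h1(2)[rule_format, of x] h2(2)[rule_format, of x] by linarith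
  qed
  then show "\<exists>h\<in>star_alg (gen_set S). \<forall>x. cmod (f x + g x - h x) \<le> e"
    using star_alg.add[OF h1(1) h2(1)] by (intro bexI[where x="\<lambda>x. h1 x + h2 x"]) simp_all
qed

lemma cstar_scal:
  assumes "f \<in> cstar_alg S"
  shows "(\<lambda>x. c * f x) \<in> cstar_alg S"
  unfolding cstar_alg_def
proof (intro CollectI allI impI)
  fix e :: real assume e: "e > 0"
  have e': "e / (cmod c + 1) > 0" using e by (intro divide_pos_pos) (auto intro: add_nonneg_pos)
  obtain h where h: "h \<in> star_alg (gen_set S)" "\<forall>x. cmod (f x - h x) \<le> e / (cmod c + 1)"
    using cstar_approx[OF assms e'] by blast
  have "cmod (c * f x - c * h x) \<le> e" for x
  proof -
    have "cmod (c * f x - c * h x) = cmod c * cmod (f x - h x)"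
      by (simp add: norm_mult[symmetric] right_diff_distrib)
    also have "\<dots> \<le> cmod c * (e / (cmod c + 1))" using h(2)[rule_format, of x] by (intro mult_left_mono) simp_all
    also have "\<dots> \<le> e"
    proof -
      have pos: "cmod c + 1 > 0" by (smt (verit) norm_ge_zero)
      have q: "cmod c / (cmod c + 1) \<le> 1" using pos by (simp add: divide_le_eq_1)
      have "cmod c * (e / (cmod c + 1)) = e * (cmod c / (cmod c + 1))" by simp
      also have "\<dots> \<le> e * 1" using q e by (intro mult_left_mono) simp_all
      finally show ?thesis by simp
    qed
    finally show ?thesis .
  qed
  then show "\<exists>h\<in>star_alg (gen_set S). \<forall>x. cmod (c * f x - h x) \<le> e"
    using star_alg.scal[OF h(1), of c] by (intro bexI[where x="\<lambda>x. c * h x"]) simp_all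
qed

lemma cstar_cnj:
  assumes "f \<in> cstar_alg S"
  shows "(\<lambda>x. cnj (f x)) \<in> cstar_alg S"
  unfolding cstar_alg_def
proof (intro CollectI allI impI)
  fix e :: real assume e: "e > 0"
  obtain h where h: "h \<in> star_alg (gen_set S)" "\<forall>x. cmod (f x - h x) \<le> e"
    using cstar_approx[OF assms e] by blast
  have "cmod (cnj (f x) - cnj (h x)) \<le> e" for x
    using h(2) by (metis complex_cnj_diff complex_mod_cnj)
  then show "\<exists>h\<in>star_alg (gen_set S). \<forall>x. cmod (cnj (f x) - h x) \<le> e"
    using star_alg.conj[OF h(1)] by (intro bexI[where x="\<lambda>x. cnj (h x)"]) simp_all
qed

lemma cstar_mult:
  assumes gen: "generates S" and f: "f \<in> cstar_alg S" and g: "g \<in> cstar_alg S"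
  shows "(\<lambda>x. f x * g x) \<in> cstar_alg S"
  unfolding cstar_alg_def
proof (intro CollectI allI impI)
  fix e :: real assume e: "e > 0"
  obtain BF where BF: "\<forall>x. cmod (f x) \<le> BF" using cstar_bnd[OF gen f] unfolding bnd_def by blast
  obtain BG where BG: "\<forall>x. cmod (g x) \<le> BG" using cstar_bnd[OF gen g] unfolding bnd_def by blast
  have BF0: "BF \<ge> 0" using BF norm_ge_zero order_trans by blast
  have BG0: "BG \<ge> 0" using BG norm_ge_zero order_trans by blast
  define \<eta> where "\<eta> = min 1 (e / (BF + BG + 1))"
  have \<eta>0: "\<eta> > 0" unfolding \<eta>_def using e BF0 BG0 by simp
  obtain h1 where h1: "h1 \<in> star_alg (gen_set S)" "\<forall>x. cmod (f x - h1 x) \<le> \<eta>"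
    using cstar_approx[OF f \<eta>0] by blast
  obtain h2 where h2: "h2 \<in> star_alg (gen_set S)" "\<forall>x. cmod (g x - h2 x) \<le> \<eta>"
    using cstar_approx[OF g \<eta>0] by blast
  have "cmod (f x * g x - h1 x * h2 x) \<le> e" for x
  proof -
    have h2b: "cmod (h2 x) \<le> BG + 1"
      using h2(2) BG norm_triangle_ineq2[of "h2 x" "g x"] \<eta>_def
      by (smt (verit) norm_minus_commute)
    have "f x * g x - h1 x * h2 x = f x * (g x - h2 x) + h2 x * (f x - h1 x)"
      by (simp add: algebra_simps)
    then have "cmod (f x * g x - h1 x * h2 x) \<le> cmod (f x) * cmod (g x - h2 x) + cmod (h2 x) * cmod (f x - h1 x)"
      by (metis norm_mult norm_triangle_ineq)
    also have "\<dots> \<le> BF * \<eta> + (BG + 1) * \<eta>"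
      using BF h2b h1(2) h2(2) BF0 BG0 by (intro add_mono mult_mono) auto
    also have "\<dots> = (BF + BG + 1) * \<eta>" by (simp add: algebra_simps)
    also have "\<dots> \<le> (BF + BG + 1) * (e / (BF + BG + 1))"
      unfolding \<eta>_def using BF0 BG0 by (intro mult_left_mono) auto
    also have "\<dots> = e" using BF0 BG0 by simp
    finally show ?thesis .
  qed
  then show "\<exists>h\<in>star_alg (gen_set S). \<forall>x. cmod (f x * g x - h x) \<le> e"
    using star_alg.mult[OF h1(1) h2(1)] by (intro bexI[where x="\<lambda>x. h1 x * h2 x"]) simp_all
qed




lemma cstar_sum:
  assumes gen: "generates S" and fI: "finite I" and f: "\<forall>i\<in>I. f i \<in> cstar_alg S"
  shows "(\<lambda>x. \<Sum>i\<in>I. f i x) \<in> cstar_alg S"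
  using fI f
proof (induction I rule: finite_induct)
  case empty then show ?case using cstar_const[of 0 S] by simp
next
  case (insert a I)
  then have "(\<lambda>x. f a x + (\<Sum>i\<in>I. f i x)) \<in> cstar_alg S" by (intro cstar_add) simp_all
  then show ?case using insert by simp
qed

lemma cstar_pow:
  assumes gen: "generates S" and f: "f \<in> cstar_alg S"
  shows "(\<lambda>x. f x ^ k) \<in> cstar_alg S"
proof (induction k)
  case 0 then show ?case using cstar_const[of 1 S] by simp
next
  case (Suc k)
  have "(\<lambda>x. f x * f x ^ k) \<in> cstar_alg S" by (rule cstar_mult[OF gen f Suc])
  then show ?case by simp
qed

context
  fixes S :: "'a::group_add set" and y :: "('a \<Rightarrow> complex) \<Rightarrow> complex"
  assumes gen: "generates S" and ych: "y \<in> metric_compactification S"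
begin

lemma ch_add: "f \<in> cstar_alg S \<Longrightarrow> g \<in> cstar_alg S \<Longrightarrow> y (\<lambda>x. f x + g x) = y f + y g"
  using ych unfolding metric_compactification_def by blast

lemma ch_mult: "f \<in> cstar_alg S \<Longrightarrow> g \<in> cstar_alg S \<Longrightarrow> y (\<lambda>x. f x * g x) = y f * y g"
  using ych unfolding metric_compactification_def by blast

lemma ch_scal: "f \<in> cstar_alg S \<Longrightarrow> y (\<lambda>x. c * f x) = c * y f"
  using ych unfolding metric_compactification_def by blast

lemma ch_one: "y (\<lambda>x. 1) = 1"
  using ych unfolding metric_compactification_def by blast

lemma ch_out: "f \<notin> cstar_alg S \<Longrightarrow> y f = 0"
  using ych unfolding metric_compactification_def by blast

lemma ch_const: "y (\<lambda>x. c) = c"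
proof -
  have "y (\<lambda>x. c * (\<lambda>x. 1) x) = c * y (\<lambda>x. 1)" by (rule ch_scal[OF cstar_const])
  then show ?thesis using ch_one by simp
qed

lemma ch_sum:
  assumes fI: "finite I" and f: "\<forall>i\<in>I. f i \<in> cstar_alg S"
  shows "y (\<lambda>x. \<Sum>i\<in>I. f i x) = (\<Sum>i\<in>I. y (f i))"
  using fI f
proof (induction I rule: finite_induct)
  case empty then show ?case using ch_const[of 0] by simp
next
  case (insert a I)
  have "y (\<lambda>x. f a x + (\<Sum>i\<in>I. f i x)) = y (f a) + y (\<lambda>x. \<Sum>i\<in>I. f i x)"
    using insert by (intro ch_add cstar_sum[OF gen]) simp_all
  then show ?case using insert by simp
qed

lemma density:
  assumes fI: "finite I" and f: "\<forall>i\<in>I. f i \<in> cstar_alg S" and e: "e > 0"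
  shows "\<exists>x. \<forall>i\<in>I. cmod (f i x - y (f i)) < e"
proof (rule ccontr)
  assume "\<not> (\<exists>x. \<forall>i\<in>I. cmod (f i x - y (f i)) < e)"
  then have far: "\<exists>i\<in>I. e \<le> cmod (f i x - y (f i))" for x by (meson not_less)
  define k where "k i = (\<lambda>x. f i x + (- y (f i)))" for i
  have kc: "k i \<in> cstar_alg S" if "i \<in> I" for i
    unfolding k_def using f that by (intro cstar_add cstar_const) simp_all
  have ky: "y (k i) = 0" if "i \<in> I" for i
  proof -
    have "y (k i) = y (f i) + y (\<lambda>x. - y (f i))" unfolding k_def
      by (rule ch_add) (use f that in \<open>simp_all add: cstar_const\<close>)
    then show ?thesis using ch_const by simp
  qed
  define p where "p = (\<lambda>x. \<Sum>i\<in>I. k i x * cnj (k i x))"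
  have kk: "(\<lambda>x. k i x * cnj (k i x)) \<in> cstar_alg S" if "i \<in> I" for i
    using kc[OF that] by (intro cstar_mult[OF gen] cstar_cnj)
  have pc: "p \<in> cstar_alg S" unfolding p_def using kk by (intro cstar_sum[OF gen fI]) blast
  have py: "y p = 0"
  proof -
    have "y p = (\<Sum>i\<in>I. y (\<lambda>x. k i x * cnj (k i x)))" unfolding p_def using kk by (intro ch_sum fI) blast
    also have "\<dots> = (\<Sum>i\<in>I. y (k i) * y (\<lambda>x. cnj (k i x)))"
      using kc by (intro sum.cong refl ch_mult cstar_cnj) blast+
    also have "\<dots> = 0" using ky by simp
    finally show ?thesis .
  qed
  define pr where "pr x = (\<Sum>i\<in>I. (cmod (k i x))\<^sup>2)" for x
  have ppr: "p x = complex_of_real (pr x)" for x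
    unfolding p_def pr_def of_real_sum complex_norm_square ..
  have pr0: "pr x \<ge> 0" for x unfolding pr_def by (rule sum_nonneg) simp
  have prge: "pr x \<ge> e\<^sup>2" for x
  proof -
    obtain i where i: "i \<in> I" "e \<le> cmod (f i x - y (f i))" using far by blast
    have "e\<^sup>2 \<le> (cmod (k i x))\<^sup>2" using i e unfolding k_def by (intro power_mono) simp_all
    also have "\<dots> \<le> pr x" unfolding pr_def using fI i(1) by (intro member_le_sum) simp_all
    finally show ?thesis .
  qed
  obtain B where B: "\<forall>x. cmod (p x) \<le> B" using cstar_bnd[OF gen pc] unfolding bnd_def by blast
  have prB: "pr x \<le> B" for x using B[rule_format, of x] pr0[of x] unfolding ppr by simp
  define B' where "B' = B + 1"
  have e2: "e\<^sup>2 > 0" using e by simp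
  have B'pos: "B' > 0" using prB[of undefined] prge[of undefined] e2 unfolding B'_def by linarith
  have prB': "pr x < B'" for x using prB[of x] unfolding B'_def by simp
  define \<theta> where "\<theta> = 1 - e\<^sup>2 / B'"
  define qr where "qr x = 1 - pr x / B'" for x
  have qr0: "qr x \<ge> 0" for x unfolding qr_def using prB'[of x] B'pos by (simp add: field_simps)
  have qr\<theta>: "qr x \<le> \<theta>" for x unfolding qr_def \<theta>_def using prge[of x] B'pos by (simp add: divide_right_mono)
  have \<theta>1: "\<theta> < 1" unfolding \<theta>_def using e2 B'pos by simp
  define q where "q = (\<lambda>x. 1 + complex_of_real (- 1 / B') * p x)"
  have qc: "q \<in> cstar_alg S" unfolding q_def using pc by (intro cstar_add cstar_const cstar_scal)
  have qq: "q x = complex_of_real (qr x)" for x unfolding q_def qr_def ppr by simp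
  define r where "r = (\<lambda>x. complex_of_real B' / p x)"
  have rr: "r x = complex_of_real (1 / (1 - qr x))" for x
    unfolding r_def ppr qr_def using B'pos by simp
  have rc: "r \<in> cstar_alg S"
  proof (rule cstar_limit)
    fix \<epsilon> :: real assume \<epsilon>: "\<epsilon> > 0"
    have "\<epsilon> * (1 - \<theta>) > 0" using \<epsilon> \<theta>1 by simp
    then obtain K where K: "\<theta> ^ K < \<epsilon> * (1 - \<theta>)" using real_arch_pow_inv \<theta>1 by blast
    define s where "s = (\<lambda>x. \<Sum>j<K. q x ^ j)"
    have sc: "s \<in> cstar_alg S" unfolding s_def using cstar_pow[OF gen qc] by (intro cstar_sum[OF gen]) simp_all
    have "cmod (r x - s x) \<le> \<epsilon>" for x
    proof -
      have a0: "qr x \<noteq> 1" using qr\<theta>[of x] \<theta>1 by simp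
      have gs: "(\<Sum>j<K. qr x ^ j) = (1 - qr x ^ K) / (1 - qr x)"
        using a0 by (simp add: sum_gp_strict)
      have "s x = complex_of_real (\<Sum>j<K. qr x ^ j)" unfolding s_def qq by simp
      then have "r x - s x = complex_of_real (1 / (1 - qr x) - (1 - qr x ^ K) / (1 - qr x))"
        unfolding rr gs by (simp only: of_real_diff)
      also have "1 / (1 - qr x) - (1 - qr x ^ K) / (1 - qr x) = qr x ^ K / (1 - qr x)"
        using a0 by (simp add: diff_divide_distrib[symmetric])
      finally have rs: "r x - s x = complex_of_real (qr x ^ K / (1 - qr x))" .
      have "cmod (r x - s x) = \<bar>qr x ^ K / (1 - qr x)\<bar>" unfolding rs norm_of_real ..
      also have "\<dots> = qr x ^ K / (1 - qr x)"
        using qr0[of x] qr\<theta>[of x] \<theta>1 by (intro abs_of_nonneg divide_nonneg_nonneg) simp_all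
      also have "\<dots> \<le> \<theta> ^ K / (1 - \<theta>)"
        using qr0[of x] qr\<theta>[of x] \<theta>1
        by (intro frac_le power_mono zero_le_power) simp_all
      also have "\<dots> \<le> \<epsilon>" using K \<theta>1 by (simp add: field_simps)
      finally show ?thesis .
    qed
    then show "\<exists>f\<in>cstar_alg S. \<forall>x. cmod (r x - f x) \<le> \<epsilon>" using sc by blast
  qed
  have "y (\<lambda>x. p x * r x) = y p * y r" by (rule ch_mult[OF pc rc])
  also have "\<dots> = 0" using py by simp
  finally have "y (\<lambda>x. p x * r x) = 0" .
  moreover have "(\<lambda>x. p x * r x) = (\<lambda>x. complex_of_real B')"
  proof
    fix x
    have "pr x \<noteq> 0" using prge[of x] e2 by linarith
    then show "p x * r x = complex_of_real B'" unfolding r_def ppr by simp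
  qed
  ultimately show False using ch_const[of "complex_of_real B'"] B'pos by simp
qed

end


lemma tendsto_fun_iff:
  "((f::'c \<Rightarrow> 'd \<Rightarrow> 'b::topological_space) \<longlongrightarrow> l) F \<longleftrightarrow> (\<forall>i. ((\<lambda>x. f x i) \<longlongrightarrow> l i) F)"
  using limitin_componentwise[of "\<lambda>i. euclidean" UNIV f l F]
  by (simp add: euclidean_product_topology)

definition delta :: "'a \<Rightarrow> 'a \<Rightarrow> complex" where
  "delta k = (\<lambda>x. if x = k then 1 else 0)"

lemma delta_cstar: "delta k \<in> cstar_alg S"
proof (rule star_cstar, rule star_alg.gen)
  have "finite {x. \<epsilon> \<le> cmod (delta k x)}" if "\<epsilon> > 0" for \<epsilon>
  proof (rule finite_subset[of _ "{k}"])
    show "{x. \<epsilon> \<le> cmod (delta k x)} \<subseteq> {k}" using that unfolding delta_def by auto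
  qed simp
  then have "delta k \<in> vanish_at_infinity" unfolding vanish_at_infinity_def by blast
  then show "delta k \<in> gen_set S" unfolding gen_set_def by blast
qed

lemma busemann_cstar: "busemann S z \<in> cstar_alg S"
proof (rule star_cstar, rule star_alg.gen)
  show "busemann S z \<in> gen_set S" unfolding gen_set_def by (rule UnI2) simp
qed

lemma busemann_val: "busemann S z x = of_int (int (word_len S (-x)) - int (word_len S (-x + z)))"
  by (simp add: busemann_def word_dist_def)

lemma busemann_shift:
  "(\<lambda>x. busemann S z (g + x)) = (\<lambda>x. busemann S (-g + z) x + (-1) * busemann S (-g) x)"
proof
  fix x
  have e1: "-(g + x) = -x + -g" by (simp only: minus_add)
  have e2: "-x + -g + z = -x + (-g + z)" by (simp only: add.assoc)
  show "busemann S z (g + x) = busemann S (-g + z) x + (-1) * busemann S (-g) x"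
    unfolding busemann_val e1 e2 by simp
qed

lemma star_transl:
  assumes "f \<in> star_alg (gen_set S)"
  shows "(\<lambda>x. f (g + x)) \<in> star_alg (gen_set S)"
  using assms
proof (induction rule: star_alg.induct)
  case (gen f)
  then consider (v) "f \<in> vanish_at_infinity" | (c) "f \<in> range (\<lambda>c x. c)" | (b) "f \<in> range (busemann S)"
    unfolding gen_set_def by blast
  then show ?case
  proof cases
    case v
    have "finite {x. \<epsilon> \<le> cmod (f (g + x))}" if "\<epsilon> > 0" for \<epsilon>
    proof (rule finite_subset)
      show "{x. \<epsilon> \<le> cmod (f (g + x))} \<subseteq> (\<lambda>x. -g + x) ` {x. \<epsilon> \<le> cmod (f x)}"
      proof
        fix x assume "x \<in> {x. \<epsilon> \<le> cmod (f (g + x))}"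
        then have "g + x \<in> {x. \<epsilon> \<le> cmod (f x)}" by simp
        moreover have "x = -g + (g + x)" by (simp add: add.assoc[symmetric])
        ultimately show "x \<in> (\<lambda>x. -g + x) ` {x. \<epsilon> \<le> cmod (f x)}" by blast
      qed
      show "finite ((\<lambda>x. -g + x) ` {x. \<epsilon> \<le> cmod (f x)})"
        using v that unfolding vanish_at_infinity_def by simp
    qed
    then have "(\<lambda>x. f (g + x)) \<in> vanish_at_infinity" unfolding vanish_at_infinity_def by blast
    then show ?thesis unfolding gen_set_def by (intro star_alg.gen) blast
  next
    case c
    then obtain c where "f = (\<lambda>x. c)" by blast
    then show ?thesis using gen.hyps by (simp add: star_alg.gen)
  next
    case b
    then obtain z where z: "f = busemann S z" by blast
    have "busemann S (-g + z) \<in> star_alg (gen_set S)" "busemann S (-g) \<in> star_alg (gen_set S)"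
      unfolding gen_set_def by (intro star_alg.gen, rule UnI2, simp)+
    then have "(\<lambda>x. busemann S (-g + z) x + (-1) * busemann S (-g) x) \<in> star_alg (gen_set S)"
      by (intro star_alg.add star_alg.scal)
    then show ?thesis unfolding z busemann_shift .
  qed
next
  case (add f1 f2) then show ?case by (intro star_alg.add)
next
  case (mult f1 f2) then show ?case by (intro star_alg.mult)
next
  case (scal f1 c) then show ?case by (intro star_alg.scal)
next
  case (conj f1) then show ?case by (intro star_alg.conj)
qed

lemma cstar_transl:
  assumes "f \<in> cstar_alg S"
  shows "(\<lambda>x. f (g + x)) \<in> cstar_alg S"
  unfolding cstar_alg_def
proof (intro CollectI allI impI)
  fix e :: real assume "e > 0"
  then obtain h where h: "h \<in> star_alg (gen_set S)" "\<forall>x. cmod (f x - h x) \<le> e"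
    using cstar_approx[OF assms] by blast
  show "\<exists>h\<in>star_alg (gen_set S). \<forall>x. cmod (f (g + x) - h x) \<le> e"
    using star_transl[OF h(1), of g] h(2) by (intro bexI[where x="\<lambda>x. h (g + x)"]) simp_all
qed

definition hy :: "'a::group_add set \<Rightarrow> (('a \<Rightarrow> complex) \<Rightarrow> complex) \<Rightarrow> 'a \<Rightarrow> int" where
  "hy S y z = \<lfloor>Re (y (busemann S z))\<rfloor>"

context
  fixes S :: "'a::group_add set" and y :: "('a \<Rightarrow> complex) \<Rightarrow> complex"
  assumes gen: "generates S" and yb: "y \<in> metric_boundary S"
begin

lemma ych: "y \<in> metric_compactification S"
  using yb unfolding metric_boundary_def by blast

lemma ynot: "y \<notin> range (eval_char S)"
  using yb unfolding metric_boundary_def by blast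

lemma bd_delta: "y (delta k) = 0"
proof -
  let ?c = "y (delta k)"
  have dd: "(\<lambda>x. delta k x * delta k x) = delta k" unfolding delta_def by auto
  have "y (\<lambda>x. delta k x * delta k x) = ?c * ?c" by (rule ch_mult[OF gen ych delta_cstar delta_cstar])
  then have "?c * ?c = ?c" using dd by simp
  then have c01: "?c = 0 \<or> ?c = 1" by (metis mult_cancel_right2 mult_eq_0_iff)
  have "?c \<noteq> 1"
  proof
    assume c1: "?c = 1"
    have "y = eval_char S k"
    proof
      fix f
      show "y f = eval_char S k f"
      proof (cases "f \<in> cstar_alg S")
        case True
        have "(\<lambda>x. f x * delta k x) = (\<lambda>x. f k * delta k x)" unfolding delta_def by auto
        moreover have "y (\<lambda>x. f x * delta k x) = y f * ?c" by (rule ch_mult[OF gen ych True delta_cstar])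
        moreover have "y (\<lambda>x. f k * delta k x) = f k * ?c" by (rule ch_scal[OF gen ych delta_cstar])
        ultimately have "y f * ?c = f k * ?c" by metis
        then show ?thesis using c1 True unfolding eval_char_def by simp
      next
        case False
        then show ?thesis using ch_out[OF gen ych False] unfolding eval_char_def by simp
      qed
    qed
    then show False using ynot by blast
  qed
  then show ?thesis using c01 by blast
qed

lemma bd_int: "y (busemann S z) = of_int (hy S y z)"
proof -
  let ?c = "y (busemann S z)"
  let ?b = "\<lambda>x. int (word_len S (-x)) - int (word_len S (-x + z))"
  have approx: "\<exists>x. cmod (of_int (?b x) - ?c) < e" if "e > 0" for e
  proof -
    have "\<exists>x. \<forall>i\<in>{0::nat}. cmod ((\<lambda>_. busemann S z) i x - y ((\<lambda>_. busemann S z) i)) < e"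
      by (rule density[OF gen ych]) (simp_all add: busemann_cstar that)
    then obtain x where "\<forall>i\<in>{0::nat}. cmod ((\<lambda>_. busemann S z) i x - y ((\<lambda>_. busemann S z) i)) < e"
      by blast
    then show ?thesis unfolding busemann_val by auto
  qed
  have q: "(1/4::real) > 0" by simp
  obtain x1 where x1: "cmod (of_int (?b x1) - ?c) < 1/4" using approx[OF q] by blast
  have close: "cmod (of_int (?b x1) - ?c) < e" if "e > 0" for e
  proof -
    have q: "min e (1/4) > 0" using that by simp
    obtain x where x: "cmod (of_int (?b x) - ?c) < min e (1/4)" using approx[OF q] by blast
    have "cmod (of_int (?b x) - of_int (?b x1) :: complex) \<le> cmod (of_int (?b x) - ?c) + cmod (of_int (?b x1) - ?c)"
    proof -
      have "(of_int (?b x) - of_int (?b x1) :: complex) = (of_int (?b x) - ?c) - (of_int (?b x1) - ?c)" by simp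
      then show ?thesis by (metis norm_triangle_ineq4)
    qed
    also have "\<dots> < 1/2" using x x1 by simp
    finally have "cmod (of_int (?b x - ?b x1) :: complex) < 1/2" by simp
    then have "\<bar>real_of_int (?b x - ?b x1)\<bar> < 1/2" by (simp only: norm_of_int)
    then have "?b x = ?b x1" by linarith
    then show ?thesis using x by simp
  qed
  have e: "?c = of_int (?b x1)"
  proof (rule ccontr)
    assume "?c \<noteq> of_int (?b x1)"
    then have "cmod (of_int (?b x1) - ?c) > 0" by simp
    from close[OF this] show False by simp
  qed
  have "hy S y z = ?b x1" unfolding hy_def e by (metis complex_Re_of_int floor_of_int)
  then show ?thesis using e by simp
qed

lemma bd_horo: "horo S (hy S y)"
  unfolding horo_def
proof (intro allI impI)
  fix Z K :: "'a set" assume fZ: "finite Z" and fK: "finite K"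
  define I where "I = Inl ` Z \<union> Inr ` K"
  define f where "f = case_sum (busemann S) delta"
  have fI: "finite I" unfolding I_def using fZ fK by simp
  have fc: "\<forall>i\<in>I. f i \<in> cstar_alg S" unfolding I_def f_def using busemann_cstar delta_cstar by auto
  obtain x where x: "\<forall>i\<in>I. cmod (f i x - y (f i)) < 1/2"
    using density[OF gen ych fI fc, of "1/2"] by auto
  have "x \<notin> K"
  proof
    assume "x \<in> K"
    then have "Inr x \<in> I" unfolding I_def by blast
    then have "cmod (f (Inr x) x - y (f (Inr x))) < 1/2" using x by blast
    then have "cmod (delta x x - y (delta x)) < 1/2" unfolding f_def by simp
    then show False using bd_delta unfolding delta_def by simp
  qed
  moreover have "\<forall>z\<in>Z. hy S y z = int (word_len S (-x)) - int (word_len S (-x + z))"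
  proof
    fix z assume z: "z \<in> Z"
    then have "Inl z \<in> I" unfolding I_def by blast
    then have "cmod (f (Inl z) x - y (f (Inl z))) < 1/2" using x by blast
    then have "cmod (busemann S z x - y (busemann S z)) < 1/2" unfolding f_def by simp
    then have "cmod (of_int (int (word_len S (-x)) - int (word_len S (-x + z)) - hy S y z) :: complex) < 1/2"
      unfolding busemann_val bd_int by simp
    then have "\<bar>real_of_int (int (word_len S (-x)) - int (word_len S (-x + z)) - hy S y z)\<bar> < 1/2"
      by (simp only: norm_of_int)
    then show "hy S y z = int (word_len S (-x)) - int (word_len S (-x + z))" by linarith
  qed
  ultimately show "\<exists>w. w \<notin> K \<and> (\<forall>z\<in>Z. hy S y z = int (word_len S (-w)) - int (word_len S (-w + z)))"
    by blast
qed


lemma bd_limpt: "y islimpt range (eval_char S)"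
  unfolding islimpt_def
proof (intro allI impI)
  fix T assume yT: "y \<in> T" and oT: "open T"
  have "openin (product_topology (\<lambda>i. euclidean) UNIV) T" using oT unfolding open_fun_def .
  from product_topology_open_contains_basis[OF this yT] obtain X where
    X: "y \<in> Pi\<^sub>E UNIV X" "\<And>i. openin euclidean (X i)" "finite {i. X i \<noteq> topspace euclidean}"
       "Pi\<^sub>E UNIV X \<subseteq> T" by blast
  define I0 where "I0 = {i. X i \<noteq> UNIV}"
  have fI0: "finite I0" using X(3) unfolding I0_def by simp
  have yX: "y i \<in> X i" for i using X(1) by (simp add: PiE_iff)
  have "\<exists>e>0. ball (y i) e \<subseteq> X i" for i
    using X(2)[of i] yX[of i] by (simp add: open_contains_ball)
  then obtain e where e: "\<And>i. e i > 0" "\<And>i. ball (y i) (e i) \<subseteq> X i" by metis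
  define \<epsilon> where "\<epsilon> = Min (insert 1 (e ` I0))"
  have \<epsilon>0: "\<epsilon> > 0" unfolding \<epsilon>_def using fI0 e(1) by (subst Min_gr_iff) auto
  have \<epsilon>le: "\<epsilon> \<le> e i" if "i \<in> I0" for i unfolding \<epsilon>_def using fI0 that by (intro Min_le) auto
  define I where "I = I0 \<inter> cstar_alg S"
  have fI: "finite I" unfolding I_def using fI0 by simp
  have "\<exists>x. \<forall>i\<in>I. cmod (id i x - y (id i)) < \<epsilon>"
    by (rule density[OF gen ych fI _ \<epsilon>0]) (simp add: I_def)
  then obtain x where x: "\<forall>i\<in>I. cmod (i x - y i) < \<epsilon>" by auto
  have inX: "eval_char S x i \<in> X i" for i
  proof (cases "i \<in> I0")
    case False then show ?thesis unfolding I0_def by simp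
  next
    case True
    show ?thesis
    proof (cases "i \<in> cstar_alg S")
      case True2: True
      then have "cmod (i x - y i) < e i" using x \<epsilon>le[OF True] True unfolding I_def by force
      then have "i x \<in> ball (y i) (e i)" by (simp add: dist_norm norm_minus_commute)
      then have "i x \<in> X i" using e(2)[of i] by blast
      then show ?thesis using True2 unfolding eval_char_def by simp
    next
      case False
      then show ?thesis using yX[of i] ch_out[OF gen ych False] unfolding eval_char_def by simp
    qed
  qed
  have "eval_char S x \<in> T" using X(4) inX by (auto simp: PiE_UNIV_domain)
  moreover have "eval_char S x \<noteq> y" using ynot by auto
  ultimately show "\<exists>x'\<in>range (eval_char S). x' \<in> T \<and> x' \<noteq> y" by blast
qed

lemma eval_inj: "inj (eval_char S)"
proof
  fix a b assume ab: "eval_char S a = eval_char S b"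
  have "eval_char S a (delta a) = eval_char S b (delta a)" using ab by simp
  then show "a = b" using delta_cstar[of a S] unfolding eval_char_def delta_def by (simp split: if_splits)
qed

lemma bd_action:
  "bdry_action S g y = (\<lambda>f. if f \<in> cstar_alg S then y (\<lambda>x. f (g + x)) else 0)"
proof -
  define L where "L = (\<lambda>f. if f \<in> cstar_alg S then y (\<lambda>x. f (g + x)) else 0)"
  define F where "F = (\<lambda>ch. eval_char S (g + inv (eval_char S) ch))"
  let ?W = "at y within range (eval_char S)"
  have nt: "?W \<noteq> bot" using bd_limpt trivial_limit_within by blast
  have lim: "(F \<longlongrightarrow> L) ?W"
    unfolding tendsto_fun_iff
  proof
    fix f
    show "((\<lambda>ch. F ch f) \<longlongrightarrow> L f) ?W"
    proof (cases "f \<in> cstar_alg S")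
      case False
      then show ?thesis unfolding F_def L_def eval_char_def by simp
    next
      case True
      define G where "G = (\<lambda>x. f (g + x))"
      have Gc: "G \<in> cstar_alg S" unfolding G_def by (rule cstar_transl[OF True])
      have "\<forall>y0. ((\<lambda>ch. ch G) \<longlongrightarrow> y0 G) (at y0)"
        using continuous_on_product_coordinates[of G] by (simp add: continuous_on_def)
      then have c: "((\<lambda>ch. ch G) \<longlongrightarrow> y G) (at y)" by blast
      then have c': "((\<lambda>ch. ch G) \<longlongrightarrow> y G) ?W" by (rule tendsto_within_subset) simp
      have ev: "eventually (\<lambda>ch. ch G = F ch f) ?W"
        unfolding eventually_at_filter
      proof (rule always_eventually, intro allI impI)
        fix ch assume "ch \<in> range (eval_char S)"
        then obtain x where x: "ch = eval_char S x" by blast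
        have "inv (eval_char S) ch = x" unfolding x by (rule inv_f_f[OF eval_inj])
        then have "F ch f = f (g + x)" unfolding F_def using True by (simp add: eval_char_def)
        moreover have "ch G = G x" unfolding x using Gc by (simp add: eval_char_def)
        ultimately show "ch G = F ch f" unfolding G_def by simp
      qed
      have "L f = y G" unfolding L_def G_def using True by simp
      then show ?thesis using Lim_transform_eventually[OF c' ev] by simp
    qed
  qed
  have uniq: "L' = L" if "(F \<longlongrightarrow> L') ?W" for L'
  proof
    fix f
    have "((\<lambda>ch. F ch f) \<longlongrightarrow> L' f) ?W" using that unfolding tendsto_fun_iff by blast
    moreover have "((\<lambda>ch. F ch f) \<longlongrightarrow> L f) ?W" using lim unfolding tendsto_fun_iff by blast
    ultimately show "L' f = L f" using tendsto_unique[OF nt] by blast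
  qed
  have "bdry_action S g y = L"
    unfolding bdry_action_def F_def[symmetric]
    by (rule the_equality[where P="\<lambda>L. (F \<longlongrightarrow> L) ?W", OF lim uniq])
  then show ?thesis unfolding L_def .
qed

lemma hy_action: "hy S (bdry_action S g y) z = hy S y (-g + z) - hy S y (-g)"
proof -
  have "bdry_action S g y (busemann S z) = y (\<lambda>x. busemann S z (g + x))"
    unfolding bd_action using busemann_cstar[of S z] by simp
  also have "\<dots> = y (\<lambda>x. busemann S (-g + z) x + (-1) * busemann S (-g) x)"
    unfolding busemann_shift ..
  also have "\<dots> = y (busemann S (-g + z)) + y (\<lambda>x. (-1) * busemann S (-g) x)"
    by (rule ch_add[OF gen ych busemann_cstar cstar_scal[OF busemann_cstar]])
  also have "\<dots> = y (busemann S (-g + z)) + (-1) * y (busemann S (-g))"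
    by (subst ch_scal[OF gen ych busemann_cstar]) (rule refl)
  also have "\<dots> = of_int (hy S y (-g + z) - hy S y (-g))"
    unfolding bd_int by simp
  finally have e: "bdry_action S g y (busemann S z) = of_int (hy S y (-g + z) - hy S y (-g))" .
  show ?thesis unfolding hy_def[of S "bdry_action S g y"] e by (metis complex_Re_of_int floor_of_int)
qed

end


context
  fixes S :: "'a::group_add set"
  assumes gen: "generates S"
begin

lemma W_equiv:
  "Wset S (\<lambda>z. h (-g + z) - h (-g)) 0 R t = (\<lambda>v. g + v) ` Wset S h (-g) R (t + h (-g))"
proof -
  have mem: "v \<in> Wset S (\<lambda>z. h (-g + z) - h (-g)) 0 R t \<longleftrightarrow> -g + v \<in> Wset S h (-g) R (t + h (-g))" for v
  proof
    assume "v \<in> Wset S (\<lambda>z. h (-g + z) - h (-g)) 0 R t"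
    then obtain u where u: "h (-g + v) - h (-g) = t" "word_len S (-0 + u) \<le> R"
      "int (word_len S (-u + v)) + (h (-g + u) - h (-g)) = t"
      unfolding Wset_def by blast
    have a: "word_len S (- (-g) + (-g + u)) \<le> R" using u(2) by (simp add: add.assoc[symmetric])
    have b: "word_len S (-(-g + u) + (-g + v)) = word_len S (-u + v)"
      using d_inv[OF gen, of "-g" u v] .
    show "-g + v \<in> Wset S h (-g) R (t + h (-g))"
      unfolding Wset_def using u a b by (intro CollectI conjI exI[of _ "-g + u"]) simp_all
  next
    assume "-g + v \<in> Wset S h (-g) R (t + h (-g))"
    then obtain u where u: "h (-g + v) = t + h (-g)" "word_len S (- (-g) + u) \<le> R"
      "int (word_len S (-u + (-g + v))) + h u = t + h (-g)"
      unfolding Wset_def by blast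
    have a: "word_len S (-0 + (g + u)) \<le> R" using u(2) by simp
    have b: "word_len S (-(g + u) + v) = word_len S (-u + (-g + v))"
    proof -
      have "-(g + u) + v = -u + (-g + v)" by (simp only: minus_add add.assoc)
      then show ?thesis by simp
    qed
    have c: "-g + (g + u) = u" by (simp add: add.assoc[symmetric])
    show "v \<in> Wset S (\<lambda>z. h (-g + z) - h (-g)) 0 R t"
      unfolding Wset_def using u a b c by (intro CollectI conjI exI[of _ "g + u"]) simp_all
  qed
  show ?thesis
  proof (rule set_eqI)
    fix v
    have "v \<in> (\<lambda>v. g + v) ` Wset S h (-g) R (t + h (-g)) \<longleftrightarrow> -g + v \<in> Wset S h (-g) R (t + h (-g))"
    proof
      assume "v \<in> (\<lambda>v. g + v) ` Wset S h (-g) R (t + h (-g))"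
      then obtain w where "w \<in> Wset S h (-g) R (t + h (-g))" "v = g + w" by blast
      then show "-g + v \<in> Wset S h (-g) R (t + h (-g))" by (simp add: add.assoc[symmetric])
    next
      assume "-g + v \<in> Wset S h (-g) R (t + h (-g))"
      moreover have "v = g + (-g + v)" by (simp add: add.assoc[symmetric])
      ultimately show "v \<in> (\<lambda>v. g + v) ` Wset S h (-g) R (t + h (-g))" by blast
    qed
    then show "v \<in> Wset S (\<lambda>z. h (-g + z) - h (-g)) 0 R t \<longleftrightarrow> v \<in> (\<lambda>v. g + v) ` Wset S h (-g) R (t + h (-g))"
      using mem by simp
  qed
qed

lemma Uf_transl: "Uf ((\<lambda>v. (g::'a) + v) ` A) x = Uf A (-g + x)"
proof -
  have inj: "inj (\<lambda>v. g + v)" by (rule injI) simp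
  have "x \<in> (\<lambda>v. g + v) ` A \<longleftrightarrow> -g + x \<in> A"
  proof
    assume "x \<in> (\<lambda>v. g + v) ` A" then show "-g + x \<in> A" by (auto simp: add.assoc[symmetric])
  next
    assume "-g + x \<in> A"
    moreover have "x = g + (-g + x)" by (simp add: add.assoc[symmetric])
    ultimately show "x \<in> (\<lambda>v. g + v) ` A" by blast
  qed
  moreover have "card ((\<lambda>v. g + v) ` A) = card A" using inj by (simp add: card_image inj_on_def)
  ultimately show ?thesis unfolding Uf_def by simp
qed

lemma Mm_equiv:
  "Mm S n L T (\<lambda>z. h (-g + z) - h (-g)) 0 x = Mm S n L T h (-g) (-g + x)"
proof -
  have "Uf (Wset S (\<lambda>z. h (-g + z) - h (-g)) 0 R ((h (-g + 0) - h (-g)) + int T + int j)) x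
      = Uf (Wset S h (-g) R (h (-g) + int T + int j)) (-g + x)" for R j
  proof -
    have e: "(h (-g + 0) - h (-g)) + int T + int j + h (-g) = h (-g) + int T + int j" by simp
    show ?thesis unfolding W_equiv e Uf_transl ..
  qed
  then show ?thesis unfolding Mm_def by simp
qed

lemma horo_nonneg_bound:
  assumes hh: "horo S h" and u: "word_len S (-b + u) \<le> R"
  shows "h b - h u \<le> int R"
proof -
  have "h b - h u \<le> int (word_len S (-u + b))" by (rule horo_lip[OF gen hh])
  also have "word_len S (-u + b) = word_len S (-b + u)" by (rule d_sym[OF gen])
  finally show ?thesis using u by linarith
qed

lemma W_supp:
  assumes hh: "horo S h" and v: "v \<in> Wset S h b R t"
  shows "int (word_len S (-b + v)) \<le> 2 * int R + (t - h b)"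
proof -
  obtain u where u: "h v = t" "word_len S (-b + u) \<le> R" "int (word_len S (-u + v)) + h u = t"
    using v unfolding Wset_def by blast
  have "word_len S (-b + v) \<le> word_len S (-b + u) + word_len S (-u + v)" by (rule d_tri[OF gen])
  moreover have "h b - h u \<le> int R" by (rule horo_nonneg_bound[OF hh u(2)])
  ultimately show ?thesis using u by linarith
qed

lemma Mm_supp:
  assumes hh: "horo S h" and far: "\<not> word_len S (-b + x) \<le> 2 * L + T + n"
  shows "Mm S n L T h b x = 0"
proof -
  have "Uf (Wset S h b R (h b + int T + int j)) x = 0" if "R \<in> {1..L}" "j < n" for R j
  proof -
    have "x \<notin> Wset S h b R (h b + int T + int j)"
    proof
      assume "x \<in> Wset S h b R (h b + int T + int j)"
      from W_supp[OF hh this] have "int (word_len S (-b + x)) \<le> 2 * int R + int T + int j" by simp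
      moreover have "2 * int R + int T + int j \<le> int (2 * L + T + n)" using that by simp
      ultimately show False using far by linarith
    qed
    then show ?thesis unfolding Uf_def by simp
  qed
  then show ?thesis unfolding Mm_def by simp
qed

lemma Mm_nonneg: "Mm S n L T h b x \<ge> 0"
  unfolding Mm_def by (rule divide_nonneg_nonneg) (auto intro!: sum_nonneg Uf_nonneg)

definition Bl :: "'a \<Rightarrow> nat \<Rightarrow> 'a set" where
  "Bl b \<rho> = (\<lambda>g. b + g) ` {g. word_len S g \<le> \<rho>}"

lemma Bl_mem: "x \<in> Bl b \<rho> \<longleftrightarrow> word_len S (-b + x) \<le> \<rho>"
proof
  assume "x \<in> Bl b \<rho>" then show "word_len S (-b + x) \<le> \<rho>" unfolding Bl_def by (auto simp: add.assoc[symmetric])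
next
  assume "word_len S (-b + x) \<le> \<rho>"
  moreover have "x = b + (-b + x)" by (simp add: add.assoc[symmetric])
  ultimately show "x \<in> Bl b \<rho>" unfolding Bl_def by blast
qed

lemma Bl_finite: "finite S \<Longrightarrow> finite (Bl b \<rho>)"
  unfolding Bl_def using wl_finite[OF gen] by simp

lemma Mm_sum:
  assumes hh: "horo S h" and fS: "finite S"
    and hyp: "\<forall>x y z w. gromov_prod S x z w \<ge> min (gromov_prod S x y w) (gromov_prod S y z w) - \<delta>"
    and TL: "2 * L \<le> T" and n0: "n > 0" and L0: "L > 0"
  shows "(\<Sum>x\<in>Bl b (2 * L + T + n). Mm S n L T h b x) = 1"
proof -
  let ?X = "Bl b (2 * L + T + n)"
  have fX: "finite ?X" by (rule Bl_finite[OF fS])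
  have one: "(\<Sum>x\<in>?X. Uf (Wset S h b R (h b + int T + int j)) x) = 1" if "R \<in> {1..L}" "j < n" for R j
  proof (rule Uf_sum[OF _ _ _ fX])
    let ?t = "h b + int T + int j"
    have "2 * R \<le> T" using that TL by simp
    then have "int (2 * R) \<le> int T" by (simp only: of_nat_le_iff)
    then have "h b + 2 * int R \<le> ?t" by simp
    then show "finite (Wset S h b R ?t)" using W_card[OF gen hh fS hyp] by blast
    show "Wset S h b R ?t \<noteq> {}" by (rule W_ne[OF gen hh fS]) simp
    show "Wset S h b R ?t \<subseteq> ?X"
    proof
      fix v assume "v \<in> Wset S h b R ?t"
      from W_supp[OF hh this] have "int (word_len S (-b + v)) \<le> 2 * int R + int T + int j" by simp
      moreover have "2 * int R + int T + int j \<le> int (2 * L + T + n)" using that by simp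
      ultimately show "v \<in> ?X" unfolding Bl_mem by linarith
    qed
  qed
  have "(\<Sum>x\<in>?X. Mm S n L T h b x) = (\<Sum>x\<in>?X. \<Sum>R\<in>{1..L}. \<Sum>j<n. Uf (Wset S h b R (h b + int T + int j)) x) / real (n * L)"
    unfolding Mm_def by (simp add: sum_divide_distrib)
  also have "(\<Sum>x\<in>?X. \<Sum>R\<in>{1..L}. \<Sum>j<n. Uf (Wset S h b R (h b + int T + int j)) x)
      = (\<Sum>R\<in>{1..L}. \<Sum>j<n. \<Sum>x\<in>?X. Uf (Wset S h b R (h b + int T + int j)) x)"
    by (subst sum.swap) (simp add: sum.swap[of _ "{..<n}"])
  also have "\<dots> = (\<Sum>R\<in>{1..L}. \<Sum>j<n. (1::real))" using one by simp
  also have "\<dots> = real (n * L)" by simp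
  finally show ?thesis using n0 L0 by simp
qed

lemma Mm_local:
  assumes hh: "horo S h" and agree: "\<And>z. word_len S z \<le> 2 * L + T + n \<Longrightarrow> h' z = h z"
  shows "Mm S n L T h' 0 = Mm S n L T h 0"
proof -
  have h0: "h 0 = 0" by (rule horo_0[OF gen hh])
  have h'0: "h' 0 = 0" using agree[of 0] h0 by (simp add: wl_0[OF gen])
  have key: "v \<in> Wset S h2 0 R t \<Longrightarrow> v \<in> Wset S h3 0 R t"
    if R: "R \<le> L" and t: "0 \<le> t - int T" "t < int T + int n"
      and hs: "{h2, h3} = {h, h'}" for v R t h2 h3
  proof -
    assume "v \<in> Wset S h2 0 R t"
    then obtain u where u: "h2 v = t" "word_len S (-0 + u) \<le> R" "int (word_len S (-u + v)) + h2 u = t"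
      unfolding Wset_def by blast
    have lu: "word_len S u \<le> 2 * L + T + n" using u(2) R by simp
    have hu: "h2 u = h u" "h3 u = h u" using hs agree[OF lu] by auto
    have "h 0 - h u \<le> int R" by (rule horo_nonneg_bound[OF hh]) (use u(2) in simp)
    then have "int (word_len S (-u + v)) \<le> t + int R" using u(3) hu h0 by linarith
    moreover have "word_len S v \<le> word_len S u + word_len S (-u + v)"
      using d_tri[OF gen, of 0 v u] by simp
    ultimately have "int (word_len S v) \<le> int (2 * L + T + n)" using u(2) R t by simp
    then have lv: "word_len S v \<le> 2 * L + T + n" by linarith
    have hv: "h2 v = h v" "h3 v = h v" using hs agree[OF lv] by auto
    show "v \<in> Wset S h3 0 R t" unfolding Wset_def using u hu hv by (intro CollectI conjI exI[of _ u]) simp_all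
  qed
  have eq: "Wset S h' 0 R (h' 0 + int T + int j) = Wset S h 0 R (h 0 + int T + int j)"
    if "R \<in> {1..L}" "j < n" for R j
  proof -
    have c: "R \<le> L" "0 \<le> (int T + int j) - int T" "int T + int j < int T + int n" using that by auto
    show ?thesis unfolding h0 h'0 using key[OF c, of h' h] key[OF c, of h h'] by auto
  qed
  show ?thesis
  proof
    fix x
    have "(\<Sum>R\<in>{1..L}. \<Sum>j<n. Uf (Wset S h' 0 R (h' 0 + int T + int j)) x)
        = (\<Sum>R\<in>{1..L}. \<Sum>j<n. Uf (Wset S h 0 R (h 0 + int T + int j)) x)"
      by (rule sum.cong[OF refl], rule sum.cong[OF refl]) (simp add: eq)
    then show "Mm S n L T h' 0 x = Mm S n L T h 0 x" unfolding Mm_def by simp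
  qed
qed

end


lemma coord_tendsto: "((\<lambda>ch. ch f) \<longlongrightarrow> y0 f) (at y0 within Y)"
proof -
  have "\<forall>y0. ((\<lambda>ch. ch f) \<longlongrightarrow> y0 f) (at y0)"
    using continuous_on_product_coordinates[of f] by (simp add: continuous_on_def)
  then have "((\<lambda>ch. ch f) \<longlongrightarrow> y0 f) (at y0)" by blast
  then show ?thesis by (rule tendsto_within_subset) simp
qed

lemma int_close: "dist (complex_of_int a) (complex_of_int b) < 1/2 \<Longrightarrow> a = b"
proof -
  assume "dist (complex_of_int a) (complex_of_int b) < 1/2"
  then have "cmod (complex_of_int (a - b)) < 1/2" by (simp add: dist_norm)
  then have "\<bar>real_of_int (a - b)\<bar> < 1/2" by (simp only: norm_of_int)
  then show "a = b" by linarith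
qed

theorem mainTheorem6:
  fixes S :: "'a::group_add set"
  assumes "finite S"
    and "generates S"
    and "word_hyperbolic S"
  shows "amenable_action (bdry_action S) (metric_boundary S)"
proof -
  note fS = assms(1) and gen = assms(2)
  obtain \<delta> where hyp: "\<forall>x y z w. gromov_prod S x z w \<ge> min (gromov_prod S x y w) (gromov_prod S y z w) - \<delta>"
    using assms(3) unfolding word_hyperbolic_def by blast
  define N where "N = card {g. word_len S g \<le> nat \<lceil>4 * \<delta>\<rceil>}"
  let ?Y = "metric_boundary S"
  show ?thesis unfolding amenable_action_def
  proof (intro allI impI)
    fix F :: "'a set" and C :: "(('a \<Rightarrow> complex) \<Rightarrow> complex) set" and \<epsilon> :: real
    assume A: "finite F \<and> compact C \<and> C \<subseteq> ?Y \<and> \<epsilon> > 0"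
    then have fF: "finite F" and CY: "C \<subseteq> ?Y" and \<epsilon>0: "\<epsilon> > 0" by auto
    define r where "r = Max (insert 0 (word_len S ` F))"
    have rF: "word_len S g \<le> r" if "g \<in> F" for g
      unfolding r_def using fF that by (intro Max_ge) auto
    define c where "c = 2 * (real r + 2 * real r * real N) + 2 * real r"
    obtain K :: nat where K: "c / \<epsilon> < real K" using reals_Archimedean2 by blast
    define L where "L = K + 1"
    define n where "n = L"
    define T where "T = 2 * (L + 2 * r + 1)"
    define \<rho> where "\<rho> = 2 * L + T + n"
    have L0: "L > 0" and n0: "n > 0" unfolding n_def L_def by simp_all
    have TL: "2 * L \<le> T" unfolding T_def by simp
    define m where "m = (\<lambda>y x. Mm S n L T (hy S y) 0 x)"
    show "\<exists>m :: (('a \<Rightarrow> complex) \<Rightarrow> complex) \<Rightarrow> 'a \<Rightarrow> real.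
         (\<forall>y\<in>?Y. (\<forall>x. m y x \<ge> 0) \<and> (m y has_sum 1) UNIV) \<and>
         (\<forall>x. continuous_on ?Y (\<lambda>y. m y x)) \<and>
         (\<forall>g\<in>F. \<forall>y\<in>C. infsum (\<lambda>x. \<bar>m y (- g + x) - m (bdry_action S g y) x\<bar>) UNIV < \<epsilon>)"
    proof (rule exI[of _ m], intro conjI)
      show "\<forall>y\<in>?Y. (\<forall>x. m y x \<ge> 0) \<and> (m y has_sum 1) UNIV"
      proof (intro ballI conjI allI)
        fix y x assume "y \<in> ?Y"
        show "m y x \<ge> 0" unfolding m_def by (rule Mm_nonneg[OF gen])
      next
        fix y assume y: "y \<in> ?Y"
        have hh: "horo S (hy S y)" by (rule bd_horo[OF gen y])
        show "(m y has_sum 1) UNIV"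
        proof (rule has_sum_finite_neutralI)
          show "finite (Bl S 0 \<rho>)" by (rule Bl_finite[OF gen fS])
          show "Bl S 0 \<rho> \<subseteq> UNIV" by simp
          show "m y x = 0" if "x \<in> UNIV - Bl S 0 \<rho>" for x
            unfolding m_def using that by (intro Mm_supp[OF gen hh]) (simp add: Bl_mem[OF gen] \<rho>_def)
          show "1 = (\<Sum>x\<in>Bl S 0 \<rho>. m y x)"
            unfolding m_def \<rho>_def using Mm_sum[OF gen hh fS hyp TL n0 L0] by simp
        qed
      qed
    next
      show "\<forall>x. continuous_on ?Y (\<lambda>y. m y x)"
      proof
        fix x
        show "continuous_on ?Y (\<lambda>y. m y x)"
          unfolding continuous_on_def
        proof
          fix y0 assume y0: "y0 \<in> ?Y"
          define Bz where "Bz = {z. word_len S z \<le> \<rho>}"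
          have fBz: "finite Bz" unfolding Bz_def by (rule wl_finite[OF gen fS])
          have ev1: "\<forall>z\<in>Bz. eventually (\<lambda>y. dist (y (busemann S z)) (y0 (busemann S z)) < 1/2) (at y0 within ?Y)"
            using coord_tendsto tendstoD by (metis divide_pos_pos zero_less_numeral zero_less_one)
          have ev2: "eventually (\<lambda>y. y \<in> ?Y) (at y0 within ?Y)"
            unfolding eventually_at_filter by simp
          have "eventually (\<lambda>y. m y x = m y0 x) (at y0 within ?Y)"
            using eventually_conj[OF ev2 eventually_ball_finite[OF fBz ev1]]
          proof (rule eventually_mono)
            fix y assume y: "y \<in> ?Y \<and> (\<forall>z\<in>Bz. dist (y (busemann S z)) (y0 (busemann S z)) < 1/2)"
            have agree: "hy S y z = hy S y0 z" if "word_len S z \<le> 2 * L + T + n" for z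
            proof -
              have "z \<in> Bz" unfolding Bz_def \<rho>_def using that by simp
              then have "dist (y (busemann S z)) (y0 (busemann S z)) < 1/2" using y by blast
              then show ?thesis unfolding bd_int[OF gen conjunct1[OF y]] bd_int[OF gen y0] by (rule int_close)
            qed
            show "m y x = m y0 x" unfolding m_def
              using Mm_local[OF gen bd_horo[OF gen y0] agree] by simp
          qed
          then show "((\<lambda>y. m y x) \<longlongrightarrow> m y0 x) (at y0 within ?Y)" by (rule tendsto_eventually)
        qed
      qed
    next
      show "\<forall>g\<in>F. \<forall>y\<in>C. infsum (\<lambda>x. \<bar>m y (- g + x) - m (bdry_action S g y) x\<bar>) UNIV < \<epsilon>"
      proof (intro ballI)
        fix g y assume g: "g \<in> F" and yC: "y \<in> C"
        have y: "y \<in> ?Y" using yC CY by blast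
        define h where "h = hy S y"
        have hh: "horo S h" unfolding h_def by (rule bd_horo[OF gen y])
        define \<phi> where "\<phi> x = \<bar>Mm S n L T h 0 x - Mm S n L T h (-g) x\<bar>" for x
        have act: "hy S (bdry_action S g y) = (\<lambda>z. h (-g + z) - h (-g))"
          unfolding h_def by (rule ext) (rule hy_action[OF gen y])
        have eq: "(\<lambda>x. \<bar>m y (- g + x) - m (bdry_action S g y) x\<bar>) = (\<lambda>x. \<phi> (-g + x))"
        proof
          fix x
          have "m (bdry_action S g y) x = Mm S n L T h (-g) (-g + x)"
            unfolding m_def act by (rule Mm_equiv[OF gen])
          then show "\<bar>m y (- g + x) - m (bdry_action S g y) x\<bar> = \<phi> (-g + x)"
            unfolding \<phi>_def m_def h_def by simp
        qed
        have bij: "bij_betw (\<lambda>x. -g + x) UNIV UNIV"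
          by (rule bij_betwI[where g="\<lambda>x. g + x"]) (simp_all add: add.assoc[symmetric])
        define X where "X = Bl S 0 \<rho> \<union> Bl S (-g) \<rho>"
        have fX: "finite X" unfolding X_def using Bl_finite[OF gen fS] by simp
        have zero: "\<phi> x = 0" if "x \<in> UNIV - X" for x
        proof -
          have nx: "x \<notin> Bl S 0 \<rho>" "x \<notin> Bl S (-g) \<rho>" using that unfolding X_def by auto
          have "\<not> word_len S (-0 + x) \<le> 2 * L + T + n"
            using nx(1) Bl_mem[OF gen, of x 0 \<rho>] unfolding \<rho>_def by simp
          moreover have "\<not> word_len S (- (-g) + x) \<le> 2 * L + T + n"
            using nx(2) Bl_mem[OF gen, of x "-g" \<rho>] unfolding \<rho>_def by simp
          ultimately have "\<not> word_len S (-0 + x) \<le> 2 * L + T + n" "\<not> word_len S (- (-g) + x) \<le> 2 * L + T + n"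
            by blast+
          then show ?thesis unfolding \<phi>_def using Mm_supp[OF gen hh] by simp
        qed
        have "infsum (\<lambda>x. \<bar>m y (- g + x) - m (bdry_action S g y) x\<bar>) UNIV = infsum \<phi> UNIV"
          unfolding eq by (rule infsum_reindex_bij_betw[OF bij])
        also have "\<dots> = infsum \<phi> X"
          by (rule infsum_cong_neutral) (use zero in auto)
        also have "\<dots> = (\<Sum>x\<in>X. \<phi> x)" using fX by simp
        also have "\<dots> \<le> 2 * (real r + 2 * real r * real N) / real L + 2 * real r / real n"
          unfolding \<phi>_def N_def
        proof (rule M_est[OF gen hh fS hyp _ _ T_def fX n0 L0])
          show "word_len S (- (- g) + 0) \<le> r" using rF[OF g] by simp
          show "word_len S (- 0 + - g) \<le> r" using rF[OF g] wl_uminus[OF gen, of g] by simp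
        qed
        also have "\<dots> = c / real (K + 1)" unfolding c_def n_def L_def by (simp add: add_divide_distrib)
        also have "\<dots> < \<epsilon>"
        proof -
          have "c < \<epsilon> * real K" using K \<epsilon>0 by (simp add: divide_less_eq mult.commute)
          also have "\<dots> \<le> \<epsilon> * real (K + 1)" using \<epsilon>0 by simp
          finally show ?thesis by (simp add: divide_less_eq)
        qed
        finally show "infsum (\<lambda>x. \<bar>m y (- g + x) - m (bdry_action S g y) x\<bar>) UNIV < \<epsilon>" .
      qed
    qed
  qed
qed

end
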